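(* Let $G$ be a finite group. The monoid $(\mathsf{Sym}_{G,0}/\sim)$ of stable equivalence classes of $0$-dimensional locality preserving symmetries is a group, and there is a group isomorphism $\Omega:(\mathsf{Sym}_{G,0}/\sim)\to H^2(G,U(1))$.
   Context: A $0$-dimensional spin system is a single site: $\mathcal A=\mathcal B(\mathcal H)$ for a finite-dimensional Hilbert space $\mathcal H$. A $0$-dimensional locality preserving symmetry (LPS) $(\beta,\mathcal A)$ is a group homomorphism $\beta:G\to\mathrm{Aut}(\mathcal A)$ (equivalently $\beta_g=\mathrm{Ad}(U(g))$ for a projective unitary representation $U$). An on-site symmetry is one with $\beta_g=\mathrm{Ad}(U(g))$ for a linear unitary representation $U$. Two LPSs $(\beta,\mathcal A),(\beta',\mathcal A)$ are equivalent if $\beta'_g=\gamma^{-1}\circ\beta_g\circ\gamma$ for all $g$ for some FDQC $\gamma$ (in $0$ dimensions: an inner automorphism $\mathrm{Ad}(V)$). $(\beta,\mathcal A)$ and $(\beta',\mathcal A')$ are stably equivalent ($\sim$) if there exist on-site symmetries $(\delta,\tilde{\mathcal A}),(\delta',\tilde{\mathcal A}')$ such that $(\beta\otimes\delta,\mathcal A\otimes\tilde{\mathcal A})$ and $(\beta'\otimes\delta',\mathcal A'\otimes\tilde{\mathcal A}')$ are equivalent (in particular $\mathcal A\otimes\tilde{\mathcal A}\cong\mathcal A'\otimes\tilde{\mathcal A}'$). $\mathsf{Sym}_{G,0}$ is the set of $0$-dimensional LPSs, a monoid under stacking $(\beta\otimes\beta',\mathcal A\otimes\mathcal A')$. $H^2(G,U(1))$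 is group cohomology with trivial action. *)

theory Defs
  imports "HOL-Algebra.Coset" "Jordan_Normal_Form.Matrix"
begin

definition adj :: "complex mat \<Rightarrow> complex mat" where
  "adj A = mat (dim_col A) (dim_row A) (\<lambda>(i,j). cnj (A $$ (j,i)))"

definition unitary_mat :: "nat \<Rightarrow> complex mat \<Rightarrow> bool" where
  "unitary_mat n U \<longleftrightarrow> U \<in> carrier_mat n n \<and> U * adj U = 1\<^sub>m n \<and> adj U * U = 1\<^sub>m n"

definition Ad :: "complex mat \<Rightarrow> complex mat \<Rightarrow> complex mat" where
  "Ad U X = U * X * adj U"

definition star_aut :: "nat \<Rightarrow> (complex mat \<Rightarrow> complex mat) \<Rightarrow> bool" where
  "star_aut n f \<longleftrightarrow>
     bij_betw f (carrier_mat n n) (carrier_mat n n) \<and>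
     (\<forall>A\<in>carrier_mat n n. \<forall>B\<in>carrier_mat n n.
        f (A + B) = f A + f B \<and> f (A * B) = f A * f B) \<and>
     (\<forall>c. \<forall>A\<in>carrier_mat n n. f (c \<cdot>\<^sub>m A) = c \<cdot>\<^sub>m f A) \<and>
     (\<forall>A\<in>carrier_mat n n. f (adj A) = adj (f A))"

text \<open>A 0-dimensional LPS is a pair (n, beta): the single site algebra is M_n(C) = B(C^n), n>0,
  and beta is a group homomorphism from G to Aut(M_n(C)) (only its values on carrier G and on
  carrier_mat n n are relevant).\<close>
type_synonym 'g lps = "nat \<times> ('g \<Rightarrow> complex mat \<Rightarrow> complex mat)"

definition is_lps :: "('g, 'b) monoid_scheme \<Rightarrow> 'g lps \<Rightarrow> bool" where
  "is_lps G s \<longleftrightarrow> (case s of (n, \<beta>) \<Rightarrow>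
      0 < n \<and>
      (\<forall>g\<in>carrier G. star_aut n (\<beta> g)) \<and>
      (\<forall>g\<in>carrier G. \<forall>h\<in>carrier G. \<forall>X\<in>carrier_mat n n.
          \<beta> (g \<otimes>\<^bsub>G\<^esub> h) X = \<beta> g (\<beta> h X)) \<and>
      (\<forall>X\<in>carrier_mat n n. \<beta> \<one>\<^bsub>G\<^esub> X = X))"

definition Sym0 :: "('g, 'b) monoid_scheme \<Rightarrow> 'g lps set" where
  "Sym0 G = {s. is_lps G s}"

definition on_site :: "('g, 'b) monoid_scheme \<Rightarrow> 'g lps \<Rightarrow> bool" where
  "on_site G s \<longleftrightarrow> is_lps G s \<and> (case s of (n, \<beta>) \<Rightarrow>
      (\<exists>U. (\<forall>g\<in>carrier G. unitary_mat n (U g)) \<and>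
           (\<forall>g\<in>carrier G. \<forall>h\<in>carrier G. U (g \<otimes>\<^bsub>G\<^esub> h) = U g * U h) \<and>
           U \<one>\<^bsub>G\<^esub> = 1\<^sub>m n \<and>
           (\<forall>g\<in>carrier G. \<forall>X\<in>carrier_mat n n. \<beta> g X = Ad (U g) X)))"

definition munit :: "nat \<Rightarrow> nat \<Rightarrow> nat \<Rightarrow> complex mat" where
  "munit n i j = mat n n (\<lambda>(p,q). if p = i \<and> q = j then 1 else 0)"

text \<open>Tensor product of linear maps on M_n and M_m as a map on M_(n*m) = M_n \<otimes> M_m
  (Kronecker convention: index (i,k) \<mapsto> i*m+k), defined on matrix units and extended linearly:
  (f \<otimes> f')(\<Sum> x_{(i,k),(j,l)} E_ij \<otimes> E_kl) = \<Sum> x_{(i,k),(j,l)} f(E_ij) \<otimes> f'(E_kl).\<close>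
definition tensor_map :: "nat \<Rightarrow> (complex mat \<Rightarrow> complex mat) \<Rightarrow> nat \<Rightarrow> (complex mat \<Rightarrow> complex mat)
    \<Rightarrow> complex mat \<Rightarrow> complex mat" where
  "tensor_map n f m f' X = mat (n*m) (n*m) (\<lambda>(p,q).
     \<Sum>i<n. \<Sum>j<n. \<Sum>k<m. \<Sum>l<m.
       X $$ (i*m+k, j*m+l) * (f (munit n i j)) $$ (p div m, q div m)
                           * (f' (munit m k l)) $$ (p mod m, q mod m))"

definition stack :: "'g lps \<Rightarrow> 'g lps \<Rightarrow> 'g lps" where
  "stack s t = (case s of (n, \<beta>) \<Rightarrow> case t of (m, \<beta>') \<Rightarrow>
      (n*m, \<lambda>g. tensor_map n (\<beta> g) m (\<beta>' g)))"

text \<open>Equivalence on the same algebra: beta'_g = gamma^-1 o beta_g o gamma with gamma = Ad(V)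
  an inner automorphism (a 0-dimensional FDQC).\<close>
definition lps_equiv :: "('g, 'b) monoid_scheme \<Rightarrow> 'g lps \<Rightarrow> 'g lps \<Rightarrow> bool" where
  "lps_equiv G s t \<longleftrightarrow> (case s of (n, \<beta>) \<Rightarrow> case t of (n', \<beta>') \<Rightarrow>
      n = n' \<and> (\<exists>V. unitary_mat n V \<and>
        (\<forall>g\<in>carrier G. \<forall>X\<in>carrier_mat n n. \<beta>' g X = Ad (adj V) (\<beta> g (Ad V X)))))"

definition stably_equiv :: "('g, 'b) monoid_scheme \<Rightarrow> 'g lps \<Rightarrow> 'g lps \<Rightarrow> bool" where
  "stably_equiv G s t \<longleftrightarrow> is_lps G s \<and> is_lps G t \<and>
     (\<exists>d d'. on_site G d \<and> on_site G d' \<and> lps_equiv G (stack s d) (stack t d'))"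

definition stab_rel :: "('g, 'b) monoid_scheme \<Rightarrow> ('g lps \<times> 'g lps) set" where
  "stab_rel G = {(s, t). stably_equiv G s t}"

definition SymQ :: "('g, 'b) monoid_scheme \<Rightarrow> 'g lps set monoid" where
  "SymQ G = \<lparr> partial_object.carrier = Sym0 G // stab_rel G,
             monoid.mult = (\<lambda>X Y. stab_rel G `` {stack (SOME s. s \<in> X) (SOME t. t \<in> Y)}),
             monoid.one = stab_rel G `` {(1, \<lambda>g A. A)} \<rparr>"

text \<open>Normalised to the value 1 outside carrier G \<times> carrier G so that the cochains form a set.\<close>
definition cocycles2 :: "('g, 'b) monoid_scheme \<Rightarrow> ('g \<times> 'g \<Rightarrow> complex) set" where
  "cocycles2 G = {\<omega>.
     (\<forall>g\<in>carrier G. \<forall>h\<in>carrier G. cmod (\<omega> (g,h)) = 1) \<and>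
     (\<forall>x. x \<notin> carrier G \<times> carrier G \<longrightarrow> \<omega> x = 1) \<and>
     (\<forall>g\<in>carrier G. \<forall>h\<in>carrier G. \<forall>k\<in>carrier G.
        \<omega> (g,h) * \<omega> (g \<otimes>\<^bsub>G\<^esub> h, k) = \<omega> (h,k) * \<omega> (g, h \<otimes>\<^bsub>G\<^esub> k))}"

definition coboundaries2 :: "('g, 'b) monoid_scheme \<Rightarrow> ('g \<times> 'g \<Rightarrow> complex) set" where
  "coboundaries2 G = {\<omega>. \<exists>\<mu>. (\<forall>g\<in>carrier G. cmod (\<mu> g) = 1) \<and>
     (\<forall>g\<in>carrier G. \<forall>h\<in>carrier G. \<omega> (g,h) = \<mu> g * \<mu> h / \<mu> (g \<otimes>\<^bsub>G\<^esub> h)) \<and>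
     (\<forall>x. x \<notin> carrier G \<times> carrier G \<longrightarrow> \<omega> x = 1)}"

definition Z2 :: "('g, 'b) monoid_scheme \<Rightarrow> ('g \<times> 'g \<Rightarrow> complex) monoid" where
  "Z2 G = \<lparr> partial_object.carrier = cocycles2 G, monoid.mult = (\<lambda>a b x. a x * b x), monoid.one = (\<lambda>_. 1) \<rparr>"

definition H2 :: "('g, 'b) monoid_scheme \<Rightarrow> ('g \<times> 'g \<Rightarrow> complex) set monoid" where
  "H2 G = Z2 G Mod coboundaries2 G"

end

theory Submission
  imports Defs "Jordan_Normal_Form.Determinant"
begin

lemma adj_dim[simp]: "dim_row (adj A) = dim_col A" "dim_col (adj A) = dim_row A"
  by (simp_all add: adj_def)

lemma adj_index[simp]: "i < dim_col A \<Longrightarrow> j < dim_row A \<Longrightarrow> adj A $$ (i,j) = cnj (A $$ (j,i))"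
  by (simp add: adj_def)

lemma adj_carrier[simp,intro]: "A \<in> carrier_mat n m \<Longrightarrow> adj A \<in> carrier_mat m n"
  by (intro carrier_matI) auto

lemma sq_mult_cm: "A \<in> carrier_mat n n \<Longrightarrow> B \<in> carrier_mat n n \<Longrightarrow> A * B \<in> carrier_mat n n"
  by (rule mult_carrier_mat)

lemma sq_smult_l: "(A::complex mat) \<in> carrier_mat n n \<Longrightarrow> B \<in> carrier_mat n n \<Longrightarrow> (c \<cdot>\<^sub>m A) * B = c \<cdot>\<^sub>m (A * B)"
  by (rule mult_smult_assoc_mat)

lemma sq_smult_r: "(A::complex mat) \<in> carrier_mat n n \<Longrightarrow> B \<in> carrier_mat n n \<Longrightarrow> A * (c \<cdot>\<^sub>m B) = c \<cdot>\<^sub>m (A * B)"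
  by (rule mult_smult_distrib)

lemma smult_smult_mat[simp]: "a \<cdot>\<^sub>m (b \<cdot>\<^sub>m (A::complex mat)) = (a * b) \<cdot>\<^sub>m A"
  by (rule eq_matI) auto

lemma one_smult_mat[simp]: "1 \<cdot>\<^sub>m (A::complex mat) = A"
  by (rule eq_matI) auto

lemma sq_one_l: "(A::complex mat) \<in> carrier_mat n m \<Longrightarrow> 1\<^sub>m n * A = A" by simp
lemma sq_one_r: "(A::complex mat) \<in> carrier_mat n m \<Longrightarrow> A * 1\<^sub>m m = A" by simp

lemmas cm_simps = sq_mult_cm adj_carrier smult_carrier_mat one_carrier_mat

lemma mentry: "A \<in> carrier_mat n k \<Longrightarrow> B \<in> carrier_mat k m \<Longrightarrow> i < n \<Longrightarrow> j < m \<Longrightarrow>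
  (A * B) $$ (i,j) = (\<Sum>l<k. A $$ (i,l) * B $$ (l,j))"
  by (auto simp: scalar_prod_def lessThan_atLeast0 intro!: sum.cong)

lemma mentry'[simp]: "i < dim_row A \<Longrightarrow> j < dim_col B \<Longrightarrow> dim_col A = dim_row B \<Longrightarrow>
  (A * B) $$ (i,j) = (\<Sum>l<dim_row B. A $$ (i,l) * B $$ (l,j))"
  by (auto simp: scalar_prod_def lessThan_atLeast0 intro!: sum.cong)

declare index_mult_mat(1)[simp del]

lemma if01_mult[simp]: "(if P then 1 else 0) * (x::complex) = (if P then x else 0)"
  "x * (if P then 1 else 0) = (if P then x else 0)" by auto

lemma if_conj0[simp]: "(if A \<and> B then (x::complex) else 0) = (if A then if B then x else 0 else 0)"
  by auto

lemma massoc: "A \<in> carrier_mat n n \<Longrightarrow> B \<in> carrier_mat n n \<Longrightarrow> C \<in> carrier_mat n n \<Longrightarrow>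
  A * B * C = A * (B * C)"
  by (rule assoc_mult_mat)

lemma adj_mult: assumes "A \<in> carrier_mat n k" "B \<in> carrier_mat k m"
  shows "adj (A * B) = adj B * adj A"
proof (rule eq_matI)
  fix i j assume "i < dim_row (adj B * adj A)" "j < dim_col (adj B * adj A)"
  then have ij: "i < m" "j < n" using assms by auto
  have d: "dim_row A = n" "dim_col A = k" "dim_row B = k" "dim_col B = m" using assms by auto
  have "adj (A * B) $$ (i, j) = cnj ((A * B) $$ (j,i))" using ij d by simp
  also have "\<dots> = (\<Sum>l<k. cnj (A $$ (j,l)) * cnj (B $$ (l,i)))"
    using mentry[OF assms ij(2) ij(1)] by simp
  also have "\<dots> = (adj B * adj A) $$ (i, j)"
    using ij d by (subst mentry[of "adj B" m k "adj A" n]) (auto simp: assms mult.commute intro!: sum.cong)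
  finally show "adj (A * B) $$ (i, j) = (adj B * adj A) $$ (i, j)" .
qed (use assms in auto)

lemma adj_adj[simp]: "adj (adj A) = A"
  by (rule eq_matI) auto

lemma adj_one[simp]: "adj (1\<^sub>m n) = 1\<^sub>m n"
  by (rule eq_matI) auto

lemma adj_smult: "adj (c \<cdot>\<^sub>m A) = cnj c \<cdot>\<^sub>m adj A"
  by (rule eq_matI) auto

lemma adj_zero[simp]: "adj (0\<^sub>m n m) = 0\<^sub>m m n"
  by (rule eq_matI) auto

lemma unitary_carrier: "unitary_mat n U \<Longrightarrow> U \<in> carrier_mat n n"
  by (simp add: unitary_mat_def)

lemma unitary_UU: "unitary_mat n U \<Longrightarrow> U * adj U = 1\<^sub>m n"
  by (simp add: unitary_mat_def)

lemma unitary_UU': "unitary_mat n U \<Longrightarrow> adj U * U = 1\<^sub>m n"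
  by (simp add: unitary_mat_def)

lemma unitaryI: "U \<in> carrier_mat n n \<Longrightarrow> U * adj U = 1\<^sub>m n \<Longrightarrow> unitary_mat n U"
  unfolding unitary_mat_def using mat_mult_left_right_inverse[of U n "adj U"] by auto

lemma unitaryI2: "U \<in> carrier_mat n n \<Longrightarrow> adj U * U = 1\<^sub>m n \<Longrightarrow> unitary_mat n U"
  unfolding unitary_mat_def using mat_mult_left_right_inverse[of "adj U" n U] by auto

lemma unitary_adj: "unitary_mat n U \<Longrightarrow> unitary_mat n (adj U)"
  by (auto simp: unitary_mat_def)

lemma unitary_mult: assumes "unitary_mat n U" "unitary_mat n V" shows "unitary_mat n (U * V)"
proof -
  have c: "U \<in> carrier_mat n n" "V \<in> carrier_mat n n" using assms by (auto simp: unitary_mat_def)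
  have "U * V * adj (U * V) = U * ((V * adj V) * adj U)"
    using c by (simp add: adj_mult[OF c] massoc cm_simps)
  also have "\<dots> = 1\<^sub>m n" using assms c by (simp add: unitary_mat_def)
  finally show ?thesis using c by (intro unitaryI) auto
qed

lemma unitary_one: "unitary_mat n (1\<^sub>m n)"
  by (simp add: unitary_mat_def)

lemma cnj_mod1: "cmod c = 1 \<Longrightarrow> c * cnj c = 1"
  by (metis complex_norm_square mult.commute of_real_1 power_one)

lemma unitary_smult: assumes "unitary_mat n U" "cmod c = 1" shows "unitary_mat n (c \<cdot>\<^sub>m U)"
proof -
  have c: "U \<in> carrier_mat n n" using assms by (auto simp: unitary_mat_def)
  have "c \<cdot>\<^sub>m U * adj (c \<cdot>\<^sub>m U) = (c * cnj c) \<cdot>\<^sub>m (U * adj U)"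
    using c by (simp add: adj_smult sq_smult_l sq_smult_r cm_simps smult_smult_assoc)
  then show ?thesis using assms cnj_mod1[OF assms(2)] c by (intro unitaryI) (auto simp: unitary_mat_def)
qed

lemma munit_carrier[simp]: "munit n i j \<in> carrier_mat n n"
  by (simp add: munit_def)

lemma munit_dim[simp]: "dim_row (munit n i j) = n" "dim_col (munit n i j) = n"
  by (simp_all add: munit_def)

lemma munit_index[simp]: "p < n \<Longrightarrow> q < n \<Longrightarrow> munit n i j $$ (p,q) = (if p = i \<and> q = j then 1 else 0)"
  by (simp add: munit_def)

lemma mult_munit_r: assumes "X \<in> carrier_mat n n" "k < n" "p < n" "q < n"
  shows "(X * munit n k l) $$ (p,q) = (if q = l then X $$ (p,k) else 0)"
  using assms by simp

lemma mult_munit_l: assumes "X \<in> carrier_mat n n" "l < n" "p < n" "q < n"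
  shows "(munit n k l * X) $$ (p,q) = (if p = k then X $$ (l,q) else 0)"
  using assms by simp

lemma munit_mult: assumes "j < n" "k < n"
  shows "munit n i j * munit n k l = (if j = k then munit n i l else 0\<^sub>m n n)"
  by (rule eq_matI) (use assms in \<open>auto simp: mult_munit_r\<close>)

lemma adj_munit: "adj (munit n i j) = munit n j i"
  by (rule eq_matI) auto

lemma sandwich: assumes "X \<in> carrier_mat n n" "i < n" "j < n"
  shows "munit n 0 i * X * munit n j 0 = X $$ (i,j) \<cdot>\<^sub>m munit n 0 0"
proof (rule eq_matI)
  fix p q assume pq: "p < dim_row (X $$ (i, j) \<cdot>\<^sub>m munit n 0 0)" "q < dim_col (X $$ (i, j) \<cdot>\<^sub>m munit n 0 0)"
  then have "p < n" "q < n" by auto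
  then show "(munit n 0 i * X * munit n j 0) $$ (p, q) = (X $$ (i, j) \<cdot>\<^sub>m munit n 0 0) $$ (p, q)"
    using assms by (simp add: mult_munit_r mult_munit_l sq_mult_cm)
qed (use assms in auto)

lemma central_scalar: assumes W: "W \<in> carrier_mat n n" and n: "0 < n"
  and comm: "\<And>i j. i < n \<Longrightarrow> j < n \<Longrightarrow> W * munit n i j = munit n i j * W"
  shows "W = W $$ (0,0) \<cdot>\<^sub>m 1\<^sub>m n"
proof (rule eq_matI)
  fix p q assume "p < dim_row (W $$ (0, 0) \<cdot>\<^sub>m 1\<^sub>m n)" "q < dim_col (W $$ (0, 0) \<cdot>\<^sub>m 1\<^sub>m n)"
  then have pq: "p < n" "q < n" by auto
  have "(W * munit n q 0) $$ (p,0) = (munit n q 0 * W) $$ (p,0)" using comm pq n by simp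
  then have "W $$ (p,q) = (if p = q then W $$ (0,0) else 0)"
    using pq n W by (simp add: mult_munit_r mult_munit_l split: if_splits)
  then show "W $$ (p, q) = (W $$ (0, 0) \<cdot>\<^sub>m 1\<^sub>m n) $$ (p, q)" using pq by simp
qed (use W in auto)

lemma unitary_cancel: assumes "unitary_mat n U" "Y \<in> carrier_mat n n"
  shows "adj U * (U * Y) = Y" "U * (adj U * Y) = Y"
proof -
  have U: "U \<in> carrier_mat n n" using assms unitary_carrier by auto
  have "adj U * (U * Y) = (adj U * U) * Y" using U assms by (simp add: assoc_mult_mat[of _ n n _ n _ n])
  then show "adj U * (U * Y) = Y" using assms by (simp add: unitary_UU')
  have "U * (adj U * Y) = (U * adj U) * Y" using U assms by (simp add: assoc_mult_mat[of _ n n _ n _ n])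
  then show "U * (adj U * Y) = Y" using assms by (simp add: unitary_UU)
qed

lemmas msimps = massoc cm_simps unitary_cancel unitary_UU unitary_UU' sq_one_l sq_one_r

lemma Ad_carrier[simp]: "U \<in> carrier_mat n n \<Longrightarrow> X \<in> carrier_mat n n \<Longrightarrow> Ad U X \<in> carrier_mat n n"
  by (simp add: Ad_def cm_simps)

lemma Ad_mult: assumes "unitary_mat n U" "X \<in> carrier_mat n n" "Y \<in> carrier_mat n n"
  shows "Ad U (X * Y) = Ad U X * Ad U Y"
proof -
  have U: "U \<in> carrier_mat n n" using assms unitary_carrier by auto
  show ?thesis
    using U assms by (simp add: Ad_def massoc cm_simps unitary_cancel)
qed

lemma Ad_Ad: assumes "U \<in> carrier_mat n n" "V \<in> carrier_mat n n" "X \<in> carrier_mat n n"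
  shows "Ad U (Ad V X) = Ad (U * V) X"
  using assms by (simp add: Ad_def massoc cm_simps adj_mult[of U n n V n])

lemma Ad_smult_U: assumes "U \<in> carrier_mat n n" "X \<in> carrier_mat n n" "cmod c = 1"
  shows "Ad (c \<cdot>\<^sub>m U) X = Ad U X"
proof -
  have "Ad (c \<cdot>\<^sub>m U) X = (c \<cdot>\<^sub>m U) * X * (cnj c \<cdot>\<^sub>m adj U)" by (simp add: Ad_def adj_smult)
  also have "\<dots> = c \<cdot>\<^sub>m (U * X) * (cnj c \<cdot>\<^sub>m adj U)" using assms by (simp add: sq_smult_l)
  also have "\<dots> = c \<cdot>\<^sub>m ((U * X) * (cnj c \<cdot>\<^sub>m adj U))"
    using assms by (intro sq_smult_l) (auto simp: cm_simps)
  also have "\<dots> = (c * cnj c) \<cdot>\<^sub>m ((U * X) * adj U)"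
    using assms by (subst sq_smult_r[of _ n]) (auto simp: cm_simps)
  finally show ?thesis using assms by (simp add: cnj_mod1 Ad_def)
qed

lemma Ad_smult_X: assumes "U \<in> carrier_mat n n" "X \<in> carrier_mat n n"
  shows "Ad U (c \<cdot>\<^sub>m X) = c \<cdot>\<^sub>m Ad U X"
proof -
  have UX: "U * X \<in> carrier_mat n n" using assms by (simp add: cm_simps)
  show ?thesis using assms unfolding Ad_def
    by (simp add: sq_smult_r[OF assms(1,2)] sq_smult_l[OF UX])
qed

lemma Ad_one: "X \<in> carrier_mat n n \<Longrightarrow> Ad (1\<^sub>m n) X = X"
  by (simp add: Ad_def)

lemma Ad_unitary_inv: assumes "unitary_mat n U" "X \<in> carrier_mat n n"
  shows "Ad (adj U) (Ad U X) = X"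
proof -
  have U: "U \<in> carrier_mat n n" using assms unitary_carrier by auto
  show ?thesis using assms U by (simp add: Ad_def msimps)
qed

lemma smult_cancel: assumes "unitary_mat n A" "0 < n" "c \<cdot>\<^sub>m A = d \<cdot>\<^sub>m A"
  shows "c = d"
proof -
  have A: "A \<in> carrier_mat n n" using assms unitary_carrier by auto
  have "c \<cdot>\<^sub>m A * adj A = d \<cdot>\<^sub>m A * adj A" using assms by simp
  then have "c \<cdot>\<^sub>m 1\<^sub>m n = d \<cdot>\<^sub>m (1\<^sub>m n :: complex mat)"
    using A assms(1) by (simp add: sq_smult_l[OF A adj_carrier[OF A]] unitary_UU)
  then have "(c \<cdot>\<^sub>m 1\<^sub>m n) $$ (0,0) = (d \<cdot>\<^sub>m (1\<^sub>m n :: complex mat)) $$ (0,0)" by simp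
  then show ?thesis using assms by simp
qed

lemma Ad_eq_scalar: assumes A: "unitary_mat n A" and B: "unitary_mat n B" and n: "0 < n"
  and eq: "\<And>X. X \<in> carrier_mat n n \<Longrightarrow> Ad A X = Ad B X"
  shows "\<exists>c. cmod c = 1 \<and> B = c \<cdot>\<^sub>m A"
proof -
  have Ac: "A \<in> carrier_mat n n" and Bc: "B \<in> carrier_mat n n" using A B unitary_carrier by auto
  define W where "W = adj A * B"
  have Wc: "W \<in> carrier_mat n n" using Ac Bc by (simp add: W_def cm_simps)
  have Wu: "unitary_mat n W" unfolding W_def by (intro unitary_mult unitary_adj A B)
  have comm: "W * X = X * W" if X: "X \<in> carrier_mat n n" for X
  proof -
    have "A * X * adj A = B * X * adj B" using eq[OF X] by (simp add: Ad_def)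
    then have "adj A * (A * X * adj A) * B = adj A * (B * X * adj B) * B" by simp
    then show ?thesis using A B X Ac Bc Wc by (simp add: massoc[where n=n] sq_mult_cm[where n=n] cm_simps unitary_cancel unitary_UU unitary_UU' sq_one_l sq_one_r W_def)
  qed
  have Weq: "W = W $$ (0,0) \<cdot>\<^sub>m 1\<^sub>m n"
    by (rule central_scalar[OF Wc n]) (simp add: comm)
  define c where "c = W $$ (0,0)"
  have "B = (A * adj A) * B" using A Bc by (simp add: unitary_UU)
  also have "\<dots> = A * W" using Ac Bc by (simp add: W_def massoc cm_simps)
  also have "\<dots> = c \<cdot>\<^sub>m A" using Ac Weq by (simp add: c_def[symmetric] sq_smult_r)
  finally have Bd: "B = c \<cdot>\<^sub>m A" .
  have Wc2: "W = c \<cdot>\<^sub>m 1\<^sub>m n" using Weq c_def by simp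
  have "1\<^sub>m n = W * adj W" using Wu unitary_UU by auto
  also have "\<dots> = (c * cnj c) \<cdot>\<^sub>m 1\<^sub>m n"
    unfolding Wc2 by (simp add: adj_smult sq_smult_l[where n=n] sq_smult_r[where n=n] mult.commute)
  finally have "(1\<^sub>m n :: complex mat) $$ (0,0) = ((c * cnj c) \<cdot>\<^sub>m 1\<^sub>m n) $$ (0,0)" by simp
  then have "c * cnj c = 1" using n by simp
  then have "cmod c = 1"
    by (metis complex_mod_sqrt_Re_mult_cnj one_complex.simps(1) real_sqrt_one)
  then show ?thesis using Bd by blast
qed


lemma smult_zero_mat: "(A::complex mat) \<in> carrier_mat n m \<Longrightarrow> 0 \<cdot>\<^sub>m A = 0\<^sub>m n m"
  by (rule eq_matI) auto

lemma star_autD: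
  assumes "star_aut n f"
  shows "\<And>A. A \<in> carrier_mat n n \<Longrightarrow> f A \<in> carrier_mat n n"
    and "inj_on f (carrier_mat n n)"
    and "\<And>A B. A \<in> carrier_mat n n \<Longrightarrow> B \<in> carrier_mat n n \<Longrightarrow> f (A * B) = f A * f B"
    and "\<And>c A. A \<in> carrier_mat n n \<Longrightarrow> f (c \<cdot>\<^sub>m A) = c \<cdot>\<^sub>m f A"
    and "\<And>A. A \<in> carrier_mat n n \<Longrightarrow> f (adj A) = adj (f A)"
  using assms unfolding star_aut_def bij_betw_def by auto

lemma skolem_noether:
  assumes sa: "star_aut n f" and n: "0 < n"
  shows "\<exists>U. unitary_mat n U \<and> (\<forall>X\<in>carrier_mat n n. f X = Ad U X)"
proof -
  define E where "E i j = munit n i j" for i j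
  have Ec[simp]: "E i j \<in> carrier_mat n n" for i j by (simp add: E_def)
  have Ed[simp]: "dim_row (E i j) = n" "dim_col (E i j) = n" for i j by (simp_all add: E_def)
  note fc = star_autD(1)[OF sa] and finj = star_autD(2)[OF sa] and fm = star_autD(3)[OF sa]
    and fs = star_autD(4)[OF sa] and fa = star_autD(5)[OF sa]
  have fEc[simp]: "f (E i j) \<in> carrier_mat n n" for i j by (simp add: fc)
  have fEd[simp]: "dim_row (f (E i j)) = n" "dim_col (f (E i j)) = n" for i j
    using carrier_matD[OF fEc[of i j]] by auto
  have f0: "f (0\<^sub>m n n) = 0\<^sub>m n n"
  proof -
    have "f (0\<^sub>m n n) = f (0 \<cdot>\<^sub>m E 0 0)" by (simp add: smult_zero_mat[OF Ec])
    also have "\<dots> = 0 \<cdot>\<^sub>m f (E 0 0)" by (simp add: fs)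
    finally show ?thesis by (simp add: smult_zero_mat[OF fEc])
  qed
  have fEE: "f (E i j) * f (E k l) = (if j = k then f (E i l) else 0\<^sub>m n n)"
    if "i < n" "j < n" "k < n" "l < n" for i j k l
    using that by (simp add: fm[symmetric] E_def munit_mult f0)
  have fEadj: "adj (f (E i j)) = f (E j i)" for i j
    by (simp add: fa[symmetric] E_def adj_munit)
  define P where "P = f (E 0 0)"
  have Pc: "P \<in> carrier_mat n n" by (simp add: P_def)
  have "E 0 0 \<noteq> 0\<^sub>m n n"
  proof
    assume "E 0 0 = 0\<^sub>m n n"
    then have "E 0 0 $$ (0,0) = 0\<^sub>m n n $$ (0,0)" by simp
    then show False using n by (simp add: E_def)
  qed
  then have "P \<noteq> 0\<^sub>m n n" using finj f0 unfolding P_def inj_on_def by (metis Ec zero_carrier_mat)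
  then obtain r c where rc: "r < n" "c < n" "P $$ (r,c) \<noteq> 0"
    using Pc by (metis carrier_matD(1) carrier_matD(2) eq_matI index_zero_mat(1) zero_carrier_mat)
  have PP: "P * P = P" using fEE[of 0 0 0 0] n by (simp add: P_def)
  have Padj: "adj P = P" using fEadj[of 0 0] by (simp add: P_def)
  define S where "S = (\<Sum>l<n. (cmod (P $$ (l,c)))^2)"
  have Pcc: "P $$ (c,c) = of_real S"
  proof -
    have "P $$ (c,c) = (P * P) $$ (c,c)" using PP by simp
    also have "\<dots> = (\<Sum>l<n. P $$ (c,l) * P $$ (l,c))" using Pc rc by simp
    also have "\<dots> = (\<Sum>l<n. cnj (P $$ (l,c)) * P $$ (l,c))"
    proof (rule sum.cong)
      fix l assume "l \<in> {..<n}"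
      then have "P $$ (c,l) = adj P $$ (c,l)" using Padj by simp
      also have "\<dots> = cnj (P $$ (l,c))" using Pc rc \<open>l \<in> {..<n}\<close> by simp
      finally show "P $$ (c,l) * P $$ (l,c) = cnj (P $$ (l,c)) * P $$ (l,c)" by simp
    qed simp
    also have "\<dots> = of_real S" unfolding S_def
      by (simp add: complex_norm_square[symmetric] mult.commute)
    finally show ?thesis .
  qed
  have Spos: "S > 0"
  proof -
    have "(cmod (P $$ (r,c)))^2 \<le> S" unfolding S_def
      by (rule member_le_sum) (use rc in auto)
    moreover have "(cmod (P $$ (r,c)))^2 > 0" using rc by simp
    ultimately show ?thesis by linarith
  qed
  define s where "s = complex_of_real (sqrt S)"
  have s0: "s \<noteq> 0" using Spos by (simp add: s_def)
  have ss: "s * cnj s = of_real S" using Spos by (simp add: s_def of_real_mult[symmetric] del: of_real_mult)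
  define U where "U = mat n n (\<lambda>(p,i). f (E i 0) $$ (p,c) / s)"
  have Uc: "U \<in> carrier_mat n n" by (simp add: U_def)
  have Uidx: "U $$ (p,i) = f (E i 0) $$ (p,c) / s" if "p < n" "i < n" for p i
    using that by (simp add: U_def)
  have Uu: "unitary_mat n U"
  proof (rule unitaryI2[OF Uc], rule eq_matI)
    fix i j assume "i < dim_row (1\<^sub>m n)" "j < dim_col (1\<^sub>m n)"
    then have ij: "i < n" "j < n" by auto
    have "(adj U * U) $$ (i,j) = (\<Sum>p<n. cnj (f (E i 0) $$ (p,c)) * f (E j 0) $$ (p,c)) / (s * cnj s)"
      using ij Uc by (simp add: Uidx sum_divide_distrib mult.commute)
    also have "(\<Sum>p<n. cnj (f (E i 0) $$ (p,c)) * f (E j 0) $$ (p,c)) = (f (E 0 i) * f (E j 0)) $$ (c,c)"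
    proof -
      have "(f (E 0 i) * f (E j 0)) $$ (c,c) = (\<Sum>p<n. f (E 0 i) $$ (c,p) * f (E j 0) $$ (p,c))"
        using rc by simp
      also have "\<dots> = (\<Sum>p<n. cnj (f (E i 0) $$ (p,c)) * f (E j 0) $$ (p,c))"
      proof (rule sum.cong)
        fix p assume p: "p \<in> {..<n}"
        have "f (E 0 i) $$ (c,p) = adj (f (E i 0)) $$ (c,p)" by (simp add: fEadj)
        also have "\<dots> = cnj (f (E i 0) $$ (p,c))" using p rc by simp
        finally show "f (E 0 i) $$ (c,p) * f (E j 0) $$ (p,c) = cnj (f (E i 0) $$ (p,c)) * f (E j 0) $$ (p,c)"
          by simp
      qed simp
      finally show ?thesis by simp
    qed
    also have "(f (E 0 i) * f (E j 0)) $$ (c,c) = (if i = j then P $$ (c,c) else 0)"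
      using fEE[of 0 i j 0] ij n rc by (simp add: P_def)
    finally show "(adj U * U) $$ (i,j) = 1\<^sub>m n $$ (i,j)"
      using ij ss Pcc Spos by simp
  qed (use Uc in auto)
  have fEU: "f (E i j) * U = U * E i j" if ij: "i < n" "j < n" for i j
  proof (rule eq_matI)
    fix p k assume "p < dim_row (U * E i j)" "k < dim_col (U * E i j)"
    then have pk: "p < n" "k < n" using Uc by auto
    have "(f (E i j) * U) $$ (p,k) = (\<Sum>r<n. f (E i j) $$ (p,r) * f (E k 0) $$ (r,c)) / s"
      using pk Uc by (simp add: Uidx sum_divide_distrib)
    also have "(\<Sum>r<n. f (E i j) $$ (p,r) * f (E k 0) $$ (r,c)) = (f (E i j) * f (E k 0)) $$ (p,c)"
      using pk rc by simp
    also have "\<dots> = (if j = k then f (E i 0) $$ (p,c) else 0)"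
      using fEE[of i j k 0] ij pk rc n by simp
    also have "(if j = k then f (E i 0) $$ (p,c) else 0) / s = (U * E i j) $$ (p,k)"
      using mult_munit_r[OF Uc ij(1) pk(1) pk(2), of j] pk ij by (simp add: E_def Uidx)
    finally show "(f (E i j) * U) $$ (p,k) = (U * E i j) $$ (p,k)" .
  qed (use Uc in auto)
  have fE: "f (E i j) = U * E i j * adj U" if ij: "i < n" "j < n" for i j
  proof -
    have "f (E i j) = f (E i j) * (U * adj U)" using Uu by (simp add: unitary_UU)
    also have "\<dots> = (f (E i j) * U) * adj U" using Uc by (simp add: massoc[where n=n])
    finally show ?thesis using fEU[OF ij] by simp
  qed
  have main: "f X = Ad U X" if X: "X \<in> carrier_mat n n" for X
  proof -
    have fX: "f X \<in> carrier_mat n n" using fc X by simp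
    define Y where "Y = adj U * f X * U"
    have Yc: "Y \<in> carrier_mat n n" using Uc fX by (simp add: Y_def sq_mult_cm[where n=n])
    have "Y = X"
    proof (rule eq_matI)
      fix i j assume "i < dim_row X" "j < dim_col X"
      then have ij: "i < n" "j < n" using X by auto
      have "f (E 0 i) * f X * f (E j 0) = f (E 0 i * X * E j 0)"
        using X by (simp add: fm sq_mult_cm[where n=n])
      also have "\<dots> = X $$ (i,j) \<cdot>\<^sub>m P" using X ij by (simp add: E_def sandwich fs P_def)
      finally have 1: "f (E 0 i) * f X * f (E j 0) = X $$ (i,j) \<cdot>\<^sub>m P" .
      have "E 0 i * Y * E j 0 = adj U * (f (E 0 i) * f X * f (E j 0)) * U"
        using ij n Uu Uc fX unfolding Y_def
        by (simp add: fE massoc[where n=n] sq_mult_cm[where n=n] unitary_cancel unitary_UU unitary_UU' sq_one_l sq_one_r)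
      also have "\<dots> = X $$ (i,j) \<cdot>\<^sub>m E 0 0"
        unfolding 1 using n Uu Uc fX unfolding P_def
        by (simp add: fE massoc[where n=n] sq_mult_cm[where n=n] unitary_cancel sq_smult_l[where n=n] sq_smult_r[where n=n]
             unitary_UU' sq_one_l sq_one_r)
      finally have "Y $$ (i,j) \<cdot>\<^sub>m E 0 0 = X $$ (i,j) \<cdot>\<^sub>m E 0 0"
        using sandwich[OF Yc ij] by (simp add: E_def)
      then have "(Y $$ (i,j) \<cdot>\<^sub>m E 0 0) $$ (0,0) = (X $$ (i,j) \<cdot>\<^sub>m E 0 0) $$ (0,0)" by simp
      then show "Y $$ (i,j) = X $$ (i,j)" using n by (simp add: E_def)
    qed (use X Yc in auto)
    have "f X = (U * adj U) * f X * (U * adj U)" using Uu fX by (simp add: unitary_UU)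
    also have "\<dots> = U * Y * adj U"
      using Uc fX by (simp add: Y_def massoc[where n=n] sq_mult_cm[where n=n])
    finally show ?thesis using \<open>Y = X\<close> by (simp add: Ad_def)
  qed
  show ?thesis using Uu main by blast
qed


definition kron :: "complex mat \<Rightarrow> complex mat \<Rightarrow> complex mat" where
  "kron A B = mat (dim_row A * dim_row B) (dim_col A * dim_col B)
     (\<lambda>(p,q). A $$ (p div dim_row B, q div dim_col B) * B $$ (p mod dim_row B, q mod dim_col B))"

lemma sum_split: "(\<Sum>p<n*m. (f::nat \<Rightarrow> 'a::comm_monoid_add) p) = (\<Sum>i<n. \<Sum>k<m. f (i*m+k))"
proof -
  have "(\<Sum>p<n*m. f p) = (\<Sum>i<n. sum f {i*m..<i*m+m})"
    using sum.nat_group[of f m n] by simp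
  also have "\<dots> = (\<Sum>i<n. \<Sum>k<m. f (i*m+k))"
  proof (rule sum.cong)
    fix i show "sum f {i*m..<i*m+m} = (\<Sum>k<m. f (i*m+k))"
      using sum.shift_bounds_nat_ivl[of f 0 "i*m" m]
      by (simp add: atLeast0LessThan add.commute)
  qed simp
  finally show ?thesis .
qed

lemma divmod_lt: "p < n * m \<Longrightarrow> p div m < n" "p < n * m \<Longrightarrow> p mod m < (m::nat)"
  by (auto simp: less_mult_imp_div_less)
     (metis mod_less_divisor mult_0_right neq0_conv not_less_zero)

lemma lin_div[simp]: "k < (m::nat) \<Longrightarrow> (i*m+k) div m = i" and lin_mod[simp]: "k < m \<Longrightarrow> (i*m+k) mod m = k"
  by auto

lemma lin_lt: "i < n \<Longrightarrow> k < (m::nat) \<Longrightarrow> i*m+k < n*m"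
proof -
  assume "i < n" "k < m"
  then have "i*m + k < i*m + m" by simp
  also have "\<dots> = (i+1)*m" by simp
  also have "\<dots> \<le> n*m" using \<open>i < n\<close> by (intro mult_right_mono) auto
  finally show ?thesis .
qed

lemma kron_dim[simp]: "dim_row (kron A B) = dim_row A * dim_row B" "dim_col (kron A B) = dim_col A * dim_col B"
  by (simp_all add: kron_def)

lemma kron_carrier[simp]: "A \<in> carrier_mat n n' \<Longrightarrow> B \<in> carrier_mat m m' \<Longrightarrow> kron A B \<in> carrier_mat (n*m) (n'*m')"
  by (intro carrier_matI) auto

lemma kron_index: "A \<in> carrier_mat n n' \<Longrightarrow> B \<in> carrier_mat m m' \<Longrightarrow> p < n*m \<Longrightarrow> q < n'*m' \<Longrightarrow>
  kron A B $$ (p,q) = A $$ (p div m, q div m') * B $$ (p mod m, q mod m')"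
  by (auto simp: kron_def)

lemma kron_index_lin: "A \<in> carrier_mat n n' \<Longrightarrow> B \<in> carrier_mat m m' \<Longrightarrow> i < n \<Longrightarrow> k < m \<Longrightarrow> j < n' \<Longrightarrow> l < m' \<Longrightarrow>
  kron A B $$ (i*m+k, j*m'+l) = A $$ (i,j) * B $$ (k,l)"
  by (simp add: kron_index lin_lt)

lemma kron_mult: assumes A: "A \<in> carrier_mat n n" and C: "C \<in> carrier_mat n n"
  and B: "B \<in> carrier_mat m m" and D: "D \<in> carrier_mat m m"
  shows "kron A B * kron C D = kron (A * C) (B * D)"
proof (rule eq_matI)
  fix p q assume "p < dim_row (kron (A * C) (B * D))" "q < dim_col (kron (A * C) (B * D))"
  then have pq: "p < n*m" "q < n*m" using A B C D by auto
  note dm = divmod_lt[OF pq(1)] divmod_lt[OF pq(2)]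
  have "(kron A B * kron C D) $$ (p,q) = (\<Sum>r<n*m. kron A B $$ (p,r) * kron C D $$ (r,q))"
    using A B C D pq by simp
  also have "\<dots> = (\<Sum>i<n. \<Sum>k<m. (A $$ (p div m, i) * C $$ (i, q div m)) * (B $$ (p mod m, k) * D $$ (k, q mod m)))"
    unfolding sum_split using A B C D pq
    by (intro sum.cong refl) (simp add: kron_index lin_lt)
  also have "\<dots> = (\<Sum>i<n. A $$ (p div m, i) * C $$ (i, q div m)) * (\<Sum>k<m. B $$ (p mod m, k) * D $$ (k, q mod m))"
    by (simp add: sum_product)
  also have "\<dots> = kron (A * C) (B * D) $$ (p,q)"
    using A B C D pq dm by (simp add: kron_index[of _ n n _ m m])
  finally show "(kron A B * kron C D) $$ (p,q) = kron (A * C) (B * D) $$ (p,q)" .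
qed (use A B C D in auto)

lemma kron_adj: "adj (kron A B) = kron (adj A) (adj B)"
proof (rule eq_matI)
  fix p q assume pq: "p < dim_row (kron (adj A) (adj B))" "q < dim_col (kron (adj A) (adj B))"
  then show "adj (kron A B) $$ (p,q) = kron (adj A) (adj B) $$ (p,q)"
    by (simp add: kron_def divmod_lt)
qed auto

lemma kron_one: "kron (1\<^sub>m n) (1\<^sub>m m) = 1\<^sub>m (n*m)"
proof (rule eq_matI)
  fix p q assume pq: "p < dim_row (1\<^sub>m (n*m))" "q < dim_col (1\<^sub>m (n*m))"
  then have pq: "p < n*m" "q < n*m" by auto
  have "(p div m = q div m \<and> p mod m = q mod m) = (p = q)"
    by (metis div_mult_mod_eq)
  then show "kron (1\<^sub>m n) (1\<^sub>m m) $$ (p,q) = 1\<^sub>m (n*m) $$ (p,q)"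
    using pq by (auto simp: kron_def divmod_lt)
qed auto

lemma kron_smult: "kron (a \<cdot>\<^sub>m A) (b \<cdot>\<^sub>m B) = (a * b) \<cdot>\<^sub>m kron A B"
  by (rule eq_matI) (auto simp: kron_def divmod_lt)

lemma kron_unitary: assumes "unitary_mat n U" "unitary_mat m V" shows "unitary_mat (n*m) (kron U V)"
proof -
  have U: "U \<in> carrier_mat n n" and V: "V \<in> carrier_mat m m" using assms unitary_carrier by auto
  have "kron U V * adj (kron U V) = kron (U * adj U) (V * adj V)"
    using U V by (simp add: kron_adj kron_mult)
  also have "\<dots> = 1\<^sub>m (n*m)" using assms by (simp add: unitary_UU kron_one)
  finally show ?thesis using U V by (intro unitaryI) auto
qed

lemma kron_assoc: assumes A: "A \<in> carrier_mat n n" and B: "B \<in> carrier_mat m m" and C: "C \<in> carrier_mat r r"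
  shows "kron A (kron B C) = kron (kron A B) C"
proof (rule eq_matI)
  fix p q assume "p < dim_row (kron (kron A B) C)" "q < dim_col (kron (kron A B) C)"
  then have pq: "p < n*m*r" "q < n*m*r" using A B C by auto
  have r0: "r > 0" using pq by (metis mult_0_right not_less_zero neq0_conv)
  have e: "x div (m*r) = x div r div m" "x div r mod m = (x mod (m*r)) div r" "x mod (m*r) mod r = x mod r" for x :: nat
  proof -
    show "x div (m*r) = x div r div m" using div_mult2_eq[of x r m] by (simp add: mult.commute)
    have mm: "x mod (m*r) = r * (x div r mod m) + x mod r" using mod_mult2_eq[of x r m] by (simp add: mult.commute)
    show "x div r mod m = (x mod (m*r)) div r" unfolding mm using r0 by simp
    show "x mod (m*r) mod r = x mod r" unfolding mm by simp
  qed
  show "kron A (kron B C) $$ (p,q) = kron (kron A B) C $$ (p,q)"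
    using A B C pq by (simp add: kron_def e divmod_lt mult.assoc)
qed (use A B C in auto)


lemma if0_mult[simp]: "(if P then (x::complex) else 0) * y = (if P then x * y else 0)"
  "y * (if P then (x::complex) else 0) = (if P then y * x else 0)" by auto

lemma Ad_munit_index: assumes U: "U \<in> carrier_mat n n" and ij: "i < n" "j < n" and ab: "a < n" "b < n"
  shows "Ad U (munit n i j) $$ (a,b) = U $$ (a,i) * cnj (U $$ (b,j))"
proof -
  have "Ad U (munit n i j) $$ (a,b) = (\<Sum>l<n. (U * munit n i j) $$ (a,l) * adj U $$ (l,b))"
    using U ab by (simp add: Ad_def)
  also have "\<dots> = (\<Sum>l<n. (if l = j then U $$ (a,i) else 0) * cnj (U $$ (b,l)))"
    using U ab ij by (intro sum.cong refl) (simp add: mult_munit_r)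
  also have "\<dots> = U $$ (a,i) * cnj (U $$ (b,j))" using ij by simp
  finally show ?thesis .
qed

lemma tensor_map_cong:
  assumes "\<And>i j. i < n \<Longrightarrow> j < n \<Longrightarrow> f (munit n i j) = f' (munit n i j)"
    and "\<And>i j. i < m \<Longrightarrow> j < m \<Longrightarrow> g (munit m i j) = g' (munit m i j)"
  shows "tensor_map n f m g X = tensor_map n f' m g' X"
  unfolding tensor_map_def using assms by (intro cong_mat refl sum.cong) auto

lemma tensor_Ad: assumes A: "A \<in> carrier_mat n n" and B: "B \<in> carrier_mat m m" and X: "X \<in> carrier_mat (n*m) (n*m)"
  shows "tensor_map n (Ad A) m (Ad B) X = Ad (kron A B) X"
proof (rule eq_matI)
  fix p q assume "p < dim_row (Ad (kron A B) X)" "q < dim_col (Ad (kron A B) X)"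
  then have pq: "p < n*m" "q < n*m" using A B X by (auto simp: Ad_def)
  note dm = divmod_lt[OF pq(1)] divmod_lt[OF pq(2)]
  define a where "a i = A $$ (p div m, i)" for i
  define b where "b k = B $$ (p mod m, k)" for k
  define c where "c j = cnj (A $$ (q div m, j))" for j
  define d where "d l = cnj (B $$ (q mod m, l))" for l
  define x where "x i k j l = X $$ (i*m+k, j*m+l)" for i k j l
  have K: "kron A B \<in> carrier_mat (n*m) (n*m)" using A B by simp
  have "tensor_map n (Ad A) m (Ad B) X $$ (p,q) =
     (\<Sum>i<n. \<Sum>j<n. \<Sum>k<m. \<Sum>l<m. x i k j l * (a i * c j) * (b k * d l))"
    unfolding tensor_map_def using pq dm A B
    by (simp add: Ad_munit_index a_def b_def c_def d_def x_def)
  also have "\<dots> = (\<Sum>j<n. \<Sum>l<m. \<Sum>i<n. \<Sum>k<m. a i * b k * x i k j l * (c j * d l))"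
  proof -
    have "(\<Sum>i<n. \<Sum>j<n. \<Sum>k<m. \<Sum>l<m. x i k j l * (a i * c j) * (b k * d l))
        = (\<Sum>i<n. \<Sum>j<n. \<Sum>l<m. \<Sum>k<m. a i * b k * x i k j l * (c j * d l))"
      by (rule sum.cong[OF refl], rule sum.cong[OF refl], subst sum.swap, simp add: ac_simps)
    also have "\<dots> = (\<Sum>j<n. \<Sum>i<n. \<Sum>l<m. \<Sum>k<m. a i * b k * x i k j l * (c j * d l))"
      by (rule sum.swap)
    also have "\<dots> = (\<Sum>j<n. \<Sum>l<m. \<Sum>i<n. \<Sum>k<m. a i * b k * x i k j l * (c j * d l))"
      by (rule sum.cong[OF refl], rule sum.swap)
    finally show ?thesis .
  qed
  also have "\<dots> = (\<Sum>s<n*m. (\<Sum>r<n*m. kron A B $$ (p,r) * X $$ (r,s)) * cnj (kron A B $$ (q,s)))"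
    unfolding sum_split sum_distrib_right
    using pq A B by (intro sum.cong refl) (simp add: kron_index lin_lt a_def b_def c_def d_def x_def)
  also have "\<dots> = Ad (kron A B) X $$ (p,q)"
    using pq K X carrier_matD[OF A] carrier_matD[OF B] by (simp add: Ad_def mentry[OF mult_carrier_mat[OF K X] adj_carrier[OF K]] mentry[OF K X] del: mentry')
  finally show "tensor_map n (Ad A) m (Ad B) X $$ (p,q) = Ad (kron A B) X $$ (p,q)" .
qed (use A B X in \<open>auto simp: Ad_def tensor_map_def\<close>)


lemma Z2_simps[simp]: "carrier (Z2 G) = cocycles2 G" "x \<otimes>\<^bsub>Z2 G\<^esub> y = (\<lambda>z. x z * y z)"
  "\<one>\<^bsub>Z2 G\<^esub> = (\<lambda>_. 1)"
  by (simp_all add: Z2_def)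

lemma cocyclesD:
  assumes "a \<in> cocycles2 G"
  shows "\<And>g h. g \<in> carrier G \<Longrightarrow> h \<in> carrier G \<Longrightarrow> cmod (a (g,h)) = 1"
    and "\<And>x. x \<notin> carrier G \<times> carrier G \<Longrightarrow> a x = 1"
    and "\<And>g h k. g \<in> carrier G \<Longrightarrow> h \<in> carrier G \<Longrightarrow> k \<in> carrier G \<Longrightarrow>
          a (g,h) * a (g \<otimes>\<^bsub>G\<^esub> h, k) = a (h,k) * a (g, h \<otimes>\<^bsub>G\<^esub> k)"
  using assms unfolding cocycles2_def by auto

lemma cocycle_mult: assumes "a \<in> cocycles2 G" "b \<in> cocycles2 G" shows "(\<lambda>x. a x * b x) \<in> cocycles2 G"
proof -
  note A = cocyclesD[OF assms(1)] and B = cocyclesD[OF assms(2)]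
  have "a (g,h) * b (g,h) * (a (g \<otimes>\<^bsub>G\<^esub> h, k) * b (g \<otimes>\<^bsub>G\<^esub> h, k)) =
        a (h,k) * b (h,k) * (a (g, h \<otimes>\<^bsub>G\<^esub> k) * b (g, h \<otimes>\<^bsub>G\<^esub> k))"
    if "g \<in> carrier G" "h \<in> carrier G" "k \<in> carrier G" for g h k
  proof -
    have "a (g,h) * b (g,h) * (a (g \<otimes>\<^bsub>G\<^esub> h, k) * b (g \<otimes>\<^bsub>G\<^esub> h, k)) =
      (a (g,h) * a (g \<otimes>\<^bsub>G\<^esub> h, k)) * (b (g,h) * b (g \<otimes>\<^bsub>G\<^esub> h, k))" by (simp add: ac_simps)
    also have "\<dots> = (a (h,k) * a (g, h \<otimes>\<^bsub>G\<^esub> k)) * (b (h,k) * b (g, h \<otimes>\<^bsub>G\<^esub> k))"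
      using A(3)[OF that] B(3)[OF that] by simp
    finally show ?thesis by (simp add: ac_simps)
  qed
  then show ?thesis using A B unfolding cocycles2_def by (auto simp: norm_mult)
qed

lemma cocycle_one: "(\<lambda>_. 1) \<in> cocycles2 G"
  unfolding cocycles2_def by auto

lemma cocycle_inv: assumes "a \<in> cocycles2 G" shows "(\<lambda>x. inverse (a x)) \<in> cocycles2 G"
proof -
  note A = cocyclesD[OF assms(1)]
  have "inverse (a (g,h)) * inverse (a (g \<otimes>\<^bsub>G\<^esub> h, k)) = inverse (a (h,k)) * inverse (a (g, h \<otimes>\<^bsub>G\<^esub> k))"
    if "g \<in> carrier G" "h \<in> carrier G" "k \<in> carrier G" for g h k
    using A(3)[OF that] by (metis inverse_mult_distrib)
  then show ?thesis using A unfolding cocycles2_def by (auto simp: norm_inverse)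
qed

lemma Z2_comm_group: "comm_group (Z2 G)"
proof (rule comm_groupI)
  fix x assume x: "x \<in> carrier (Z2 G)"
  have "(\<lambda>z. inverse (x z)) \<otimes>\<^bsub>Z2 G\<^esub> x = \<one>\<^bsub>Z2 G\<^esub>"
  proof -
    have "inverse (x z) * x z = 1" for z
    proof (cases "z \<in> carrier G \<times> carrier G")
      case True
      then have "cmod (x z) = 1" using cocyclesD(1)[of x G] x by (cases z) auto
      then show ?thesis by (metis norm_zero zero_neq_one left_inverse)
    next
      case False then show ?thesis using cocyclesD(2)[of x G] x by simp
    qed
    then show ?thesis by simp
  qed
  then show "\<exists>y\<in>carrier (Z2 G). y \<otimes>\<^bsub>Z2 G\<^esub> x = \<one>\<^bsub>Z2 G\<^esub>"
    using cocycle_inv[of x G] x by (intro bexI[of _ "\<lambda>z. inverse (x z)"]) auto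
qed (auto simp: cocycle_mult cocycle_one ac_simps)

lemma Z2_inv: assumes "a \<in> cocycles2 G" shows "inv\<^bsub>Z2 G\<^esub> a = (\<lambda>z. inverse (a z))"
proof -
  interpret Z: comm_group "Z2 G" by (rule Z2_comm_group)
  have "inverse (a z) * a z = 1" for z
  proof (cases "z \<in> carrier G \<times> carrier G")
    case True
    then have "cmod (a z) = 1" using cocyclesD(1)[of a G] assms by (cases z) auto
    then show ?thesis by (metis norm_zero zero_neq_one left_inverse)
  next
    case False then show ?thesis using cocyclesD(2)[of a G] assms by simp
  qed
  then show ?thesis using assms cocycle_inv[OF assms]
    by (intro Z.inv_equality) auto
qed

lemma coboundariesD:
  assumes "b \<in> coboundaries2 G"
  obtains \<mu> where "\<And>g. g \<in> carrier G \<Longrightarrow> cmod (\<mu> g) = 1"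
    "\<And>g h. g \<in> carrier G \<Longrightarrow> h \<in> carrier G \<Longrightarrow> b (g,h) = \<mu> g * \<mu> h / \<mu> (g \<otimes>\<^bsub>G\<^esub> h)"
    "\<And>x. x \<notin> carrier G \<times> carrier G \<Longrightarrow> b x = 1"
  using assms unfolding coboundaries2_def by blast

lemma coboundary_cocycle: assumes G: "group G" and b: "b \<in> coboundaries2 G" shows "b \<in> cocycles2 G"
proof -
  interpret group G by (rule G)
  obtain \<mu> where m1: "\<And>g. g \<in> carrier G \<Longrightarrow> cmod (\<mu> g) = 1"
    and bd: "\<And>g h. g \<in> carrier G \<Longrightarrow> h \<in> carrier G \<Longrightarrow> b (g,h) = \<mu> g * \<mu> h / \<mu> (g \<otimes>\<^bsub>G\<^esub> h)"
    and bo: "\<And>x. x \<notin> carrier G \<times> carrier G \<Longrightarrow> b x = 1"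
    using coboundariesD[OF b] by metis
  have nz: "\<mu> g \<noteq> 0" if "g \<in> carrier G" for g using m1[OF that] by auto
  show ?thesis unfolding cocycles2_def
  proof (intro CollectI conjI ballI allI impI)
    fix g h assume "g \<in> carrier G" "h \<in> carrier G"
    then show "cmod (b (g,h)) = 1" using m1 by (simp add: bd norm_mult norm_divide)
  next
    fix x assume "x \<notin> carrier G \<times> carrier G" then show "b x = 1" by (rule bo)
  next
    fix g h k assume gh: "g \<in> carrier G" "h \<in> carrier G" "k \<in> carrier G"
    then show "b (g, h) * b (g \<otimes>\<^bsub>G\<^esub> h, k) = b (h, k) * b (g, h \<otimes>\<^bsub>G\<^esub> k)"
      using nz by (simp add: bd m_assoc field_simps)
  qed
qed

lemma coboundaries_subgroup: assumes G: "group G" shows "subgroup (coboundaries2 G) (Z2 G)"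
proof -
  interpret Z: comm_group "Z2 G" by (rule Z2_comm_group)
  interpret group G by (rule G)
  show ?thesis
  proof (rule Z.subgroupI)
    show "coboundaries2 G \<subseteq> carrier (Z2 G)" using coboundary_cocycle[OF G] by auto
    have "(\<lambda>_. 1) \<in> coboundaries2 G" unfolding coboundaries2_def
      by (intro CollectI exI[of _ "\<lambda>_. 1"]) auto
    then show "coboundaries2 G \<noteq> {}" by auto
  next
    fix a assume a: "a \<in> coboundaries2 G"
    obtain \<mu> where m1: "\<And>g. g \<in> carrier G \<Longrightarrow> cmod (\<mu> g) = 1"
      and bd: "\<And>g h. g \<in> carrier G \<Longrightarrow> h \<in> carrier G \<Longrightarrow> a (g,h) = \<mu> g * \<mu> h / \<mu> (g \<otimes>\<^bsub>G\<^esub> h)"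
      and bo: "\<And>x. x \<notin> carrier G \<times> carrier G \<Longrightarrow> a x = 1"
      using coboundariesD[OF a] by metis
    have "(\<lambda>z. inverse (a z)) \<in> coboundaries2 G" unfolding coboundaries2_def
      using m1 bo by (intro CollectI exI[of _ "\<lambda>g. inverse (\<mu> g)"])
        (auto simp: bd norm_inverse norm_divide field_simps)
    then show "inv\<^bsub>Z2 G\<^esub> a \<in> coboundaries2 G"
      using Z2_inv[OF coboundary_cocycle[OF G a]] by simp
  next
    fix a b assume a: "a \<in> coboundaries2 G" and b: "b \<in> coboundaries2 G"
    obtain \<mu> where m1: "\<And>g. g \<in> carrier G \<Longrightarrow> cmod (\<mu> g) = 1"
      and ad: "\<And>g h. g \<in> carrier G \<Longrightarrow> h \<in> carrier G \<Longrightarrow> a (g,h) = \<mu> g * \<mu> h / \<mu> (g \<otimes>\<^bsub>G\<^esub> h)"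
      and ao: "\<And>x. x \<notin> carrier G \<times> carrier G \<Longrightarrow> a x = 1"
      using coboundariesD[OF a] by metis
    obtain \<nu> where n1: "\<And>g. g \<in> carrier G \<Longrightarrow> cmod (\<nu> g) = 1"
      and bd: "\<And>g h. g \<in> carrier G \<Longrightarrow> h \<in> carrier G \<Longrightarrow> b (g,h) = \<nu> g * \<nu> h / \<nu> (g \<otimes>\<^bsub>G\<^esub> h)"
      and bo: "\<And>x. x \<notin> carrier G \<times> carrier G \<Longrightarrow> b x = 1"
      using coboundariesD[OF b] by metis
    show "a \<otimes>\<^bsub>Z2 G\<^esub> b \<in> coboundaries2 G" unfolding coboundaries2_def Z2_simps
      using m1 n1 ao bo by (intro CollectI exI[of _ "\<lambda>g. \<mu> g * \<nu> g"])
        (auto simp: ad bd norm_mult)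
  qed
qed

lemma coboundaries_normal: "group G \<Longrightarrow> coboundaries2 G \<lhd> Z2 G"
  using comm_group.subgroup_imp_normal[OF Z2_comm_group coboundaries_subgroup] by blast

lemma H2_group: "group G \<Longrightarrow> group (H2 G)"
  unfolding H2_def by (rule normal.factorgroup_is_group[OF coboundaries_normal])

lemma H2_simps: "carrier (H2 G) = rcosets\<^bsub>Z2 G\<^esub> (coboundaries2 G)"
  "X \<otimes>\<^bsub>H2 G\<^esub> Y = X <#>\<^bsub>Z2 G\<^esub> Y" "\<one>\<^bsub>H2 G\<^esub> = coboundaries2 G"
  by (simp_all add: H2_def FactGroup_def)


definition impl :: "('g, 'b) monoid_scheme \<Rightarrow> nat \<Rightarrow> ('g \<Rightarrow> complex mat \<Rightarrow> complex mat)
   \<Rightarrow> ('g \<Rightarrow> complex mat) \<Rightarrow> ('g \<times> 'g \<Rightarrow> complex) \<Rightarrow> bool" where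
  "impl G n \<beta> U \<omega> \<longleftrightarrow> (\<forall>g\<in>carrier G. unitary_mat n (U g)) \<and>
     (\<forall>g\<in>carrier G. \<forall>X\<in>carrier_mat n n. \<beta> g X = Ad (U g) X) \<and>
     (\<forall>g\<in>carrier G. \<forall>h\<in>carrier G. U g * U h = \<omega> (g,h) \<cdot>\<^sub>m U (g \<otimes>\<^bsub>G\<^esub> h)) \<and>
     \<omega> \<in> cocycles2 G"

lemma implD:
  assumes "impl G n \<beta> U \<omega>"
  shows "\<And>g. g \<in> carrier G \<Longrightarrow> unitary_mat n (U g)"
    and "\<And>g. g \<in> carrier G \<Longrightarrow> U g \<in> carrier_mat n n"
    and "\<And>g X. g \<in> carrier G \<Longrightarrow> X \<in> carrier_mat n n \<Longrightarrow> \<beta> g X = Ad (U g) X"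
    and "\<And>g h. g \<in> carrier G \<Longrightarrow> h \<in> carrier G \<Longrightarrow> U g * U h = \<omega> (g,h) \<cdot>\<^sub>m U (g \<otimes>\<^bsub>G\<^esub> h)"
    and "\<omega> \<in> cocycles2 G"
  using assms unitary_carrier unfolding impl_def by auto

lemma Ad_add: assumes "U \<in> carrier_mat n n" "A \<in> carrier_mat n n" "B \<in> carrier_mat n n"
  shows "Ad U (A + B) = Ad U A + Ad U B"
proof -
  have "U * (A + B) = U * A + U * B" using assms by (rule mult_add_distrib_mat)
  moreover have "(U * A + U * B) * adj U = U * A * adj U + U * B * adj U"
    using assms by (intro add_mult_distrib_mat) (auto simp: sq_mult_cm)
  ultimately show ?thesis by (simp add: Ad_def)
qed

lemma Ad_adj: assumes "U \<in> carrier_mat n n" "A \<in> carrier_mat n n"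
  shows "Ad U (adj A) = adj (Ad U A)"
  using assms by (simp add: Ad_def adj_mult[of _ n n _ n] sq_mult_cm massoc[where n=n])

lemma star_aut_Ad: assumes U: "unitary_mat n U" shows "star_aut n (Ad U)"
proof -
  have Uc: "U \<in> carrier_mat n n" using U unitary_carrier by auto
  have "bij_betw (Ad U) (carrier_mat n n) (carrier_mat n n)"
  proof (rule bij_betw_byWitness[where f' = "Ad (adj U)"])
    show "\<forall>a\<in>carrier_mat n n. Ad (adj U) (Ad U a) = a" using Ad_unitary_inv[OF U] by auto
    show "\<forall>a\<in>carrier_mat n n. Ad U (Ad (adj U) a) = a"
      using Ad_unitary_inv[OF unitary_adj[OF U]] by auto
  qed (use Uc in auto)
  then show ?thesis unfolding star_aut_def
    using Ad_add[OF Uc] Ad_mult[OF U] Ad_smult_X[OF Uc] Ad_adj[OF Uc] by auto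
qed

lemma star_aut_cong: assumes "star_aut n f" "\<And>X. X \<in> carrier_mat n n \<Longrightarrow> f X = f' X"
  shows "star_aut n f'"
proof -
  have "bij_betw f' (carrier_mat n n) (carrier_mat n n)"
    using assms unfolding star_aut_def by (metis (no_types, lifting) bij_betw_cong)
  then show ?thesis using assms unfolding star_aut_def
    by (simp add: sq_mult_cm)
qed

lemma impl_exists:
  assumes G: "group G" and L: "is_lps G (n, \<beta>)"
  shows "\<exists>U \<omega>. impl G n \<beta> U \<omega>"
proof -
  interpret group G by (rule G)
  have n: "0 < n" and sa: "\<And>g. g \<in> carrier G \<Longrightarrow> star_aut n (\<beta> g)"
    and hom: "\<And>g h X. g \<in> carrier G \<Longrightarrow> h \<in> carrier G \<Longrightarrow> X \<in> carrier_mat n n \<Longrightarrow>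
        \<beta> (g \<otimes>\<^bsub>G\<^esub> h) X = \<beta> g (\<beta> h X)"
    using L unfolding is_lps_def by auto
  have "\<forall>g\<in>carrier G. \<exists>U. unitary_mat n U \<and> (\<forall>X\<in>carrier_mat n n. \<beta> g X = Ad U X)"
    using skolem_noether[OF sa n] by blast
  then obtain U where U: "\<And>g. g \<in> carrier G \<Longrightarrow> unitary_mat n (U g)"
    and UA: "\<And>g X. g \<in> carrier G \<Longrightarrow> X \<in> carrier_mat n n \<Longrightarrow> \<beta> g X = Ad (U g) X"
    by metis
  have Uc: "\<And>g. g \<in> carrier G \<Longrightarrow> U g \<in> carrier_mat n n" using U unitary_carrier by auto
  have sc: "\<exists>c. cmod c = 1 \<and> U g * U h = c \<cdot>\<^sub>m U (g \<otimes>\<^bsub>G\<^esub> h)" if gh: "g \<in> carrier G" "h \<in> carrier G" for g h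
  proof (rule Ad_eq_scalar[OF U unitary_mult[OF U U] n])
    fix X :: "complex mat" assume X: "X \<in> carrier_mat n n"
    have "Ad (U (g \<otimes>\<^bsub>G\<^esub> h)) X = \<beta> g (\<beta> h X)" using UA[of "g \<otimes>\<^bsub>G\<^esub> h" X] hom[OF gh X] gh X by simp
    also have "\<dots> = Ad (U g) (Ad (U h) X)" using UA gh X Uc by simp
    also have "\<dots> = Ad (U g * U h) X" using Ad_Ad[OF Uc Uc X] gh by simp
    finally show "Ad (U (g \<otimes>\<^bsub>G\<^esub> h)) X = Ad (U g * U h) X" .
  qed (use gh in auto)
  define \<omega> where "\<omega> x = (if x \<in> carrier G \<times> carrier G then
      SOME c. cmod c = 1 \<and> U (fst x) * U (snd x) = c \<cdot>\<^sub>m U (fst x \<otimes>\<^bsub>G\<^esub> snd x) else 1)" for x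
  have wp: "cmod (\<omega> (g,h)) = 1 \<and> U g * U h = \<omega> (g,h) \<cdot>\<^sub>m U (g \<otimes>\<^bsub>G\<^esub> h)"
    if "g \<in> carrier G" "h \<in> carrier G" for g h
    using someI_ex[OF sc[OF that]] that by (simp add: \<omega>_def)
  have coc: "\<omega> (g,h) * \<omega> (g \<otimes>\<^bsub>G\<^esub> h, k) = \<omega> (h,k) * \<omega> (g, h \<otimes>\<^bsub>G\<^esub> k)"
    if ghk: "g \<in> carrier G" "h \<in> carrier G" "k \<in> carrier G" for g h k
  proof (rule smult_cancel[OF U[of "g \<otimes>\<^bsub>G\<^esub> h \<otimes>\<^bsub>G\<^esub> k"] n])
    show "g \<otimes>\<^bsub>G\<^esub> h \<otimes>\<^bsub>G\<^esub> k \<in> carrier G" using ghk by simp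
    have "U g * U h * U k = (\<omega> (g,h) * \<omega> (g \<otimes>\<^bsub>G\<^esub> h, k)) \<cdot>\<^sub>m U (g \<otimes>\<^bsub>G\<^esub> h \<otimes>\<^bsub>G\<^esub> k)"
      using ghk wp Uc by (simp add: sq_smult_l[where n=n])
    moreover have "U g * (U h * U k) = (\<omega> (h,k) * \<omega> (g, h \<otimes>\<^bsub>G\<^esub> k)) \<cdot>\<^sub>m U (g \<otimes>\<^bsub>G\<^esub> (h \<otimes>\<^bsub>G\<^esub> k))"
      using ghk wp Uc by (simp add: sq_smult_r[where n=n] ac_simps)
    moreover have "U g * U h * U k = U g * (U h * U k)" using ghk Uc by (simp add: massoc[where n=n])
    ultimately show "(\<omega> (g,h) * \<omega> (g \<otimes>\<^bsub>G\<^esub> h, k)) \<cdot>\<^sub>m U (g \<otimes>\<^bsub>G\<^esub> h \<otimes>\<^bsub>G\<^esub> k) = (\<omega> (h,k) * \<omega> (g, h \<otimes>\<^bsub>G\<^esub> k)) \<cdot>\<^sub>m U (g \<otimes>\<^bsub>G\<^esub> h \<otimes>\<^bsub>G\<^esub> k)"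
      using ghk by (simp add: m_assoc)
  qed
  have "\<omega> \<in> cocycles2 G" unfolding cocycles2_def using wp coc by (auto simp: \<omega>_def)
  then have "impl G n \<beta> U \<omega>" unfolding impl_def using U UA wp by auto
  then show ?thesis by blast
qed

lemma lps_of_impl:
  assumes G: "group G" and n: "0 < n" and I: "impl G n \<beta> U \<omega>"
  shows "is_lps G (n, \<beta>)"
proof -
  interpret group G by (rule G)
  note U = implD(1)[OF I] and Uc = implD(2)[OF I] and UA = implD(3)[OF I] and Um = implD(4)[OF I]
    and wc = cocyclesD[OF implD(5)[OF I]]
  have sa: "star_aut n (\<beta> g)" if "g \<in> carrier G" for g
    using star_aut_cong[OF star_aut_Ad[OF U[OF that]]] UA[OF that] by metis
  have hom: "\<beta> (g \<otimes>\<^bsub>G\<^esub> h) X = \<beta> g (\<beta> h X)" if gh: "g \<in> carrier G" "h \<in> carrier G" and X: "X \<in> carrier_mat n n" for g h X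
  proof -
    have "\<beta> g (\<beta> h X) = Ad (U g * U h) X" using gh X Uc UA Ad_Ad[OF Uc[OF gh(1)] Uc[OF gh(2)] X] by simp
    also have "\<dots> = Ad (\<omega> (g,h) \<cdot>\<^sub>m U (g \<otimes>\<^bsub>G\<^esub> h)) X" using Um gh by simp
    also have "\<dots> = Ad (U (g \<otimes>\<^bsub>G\<^esub> h)) X" using Ad_smult_U[OF Uc X wc(1)[OF gh]] gh by simp
    finally show ?thesis using UA gh X by simp
  qed
  have U1: "U \<one>\<^bsub>G\<^esub> = \<omega> (\<one>\<^bsub>G\<^esub>,\<one>\<^bsub>G\<^esub>) \<cdot>\<^sub>m 1\<^sub>m n"
  proof -
    have "U \<one>\<^bsub>G\<^esub> = adj (U \<one>\<^bsub>G\<^esub>) * (U \<one>\<^bsub>G\<^esub> * U \<one>\<^bsub>G\<^esub>)" using U[of "\<one>\<^bsub>G\<^esub>"] Uc[of "\<one>\<^bsub>G\<^esub>"] by (simp add: unitary_cancel)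
    also have "\<dots> = \<omega> (\<one>\<^bsub>G\<^esub>,\<one>\<^bsub>G\<^esub>) \<cdot>\<^sub>m (adj (U \<one>\<^bsub>G\<^esub>) * U \<one>\<^bsub>G\<^esub>)" using Um[of "\<one>\<^bsub>G\<^esub>" "\<one>\<^bsub>G\<^esub>"] Uc[of "\<one>\<^bsub>G\<^esub>"]
      by (simp add: sq_smult_r[where n=n])
    finally show ?thesis using U[of "\<one>\<^bsub>G\<^esub>"] by (simp add: unitary_UU')
  qed
  have one: "\<beta> \<one>\<^bsub>G\<^esub> X = X" if X: "X \<in> carrier_mat n n" for X
    using UA[of "\<one>\<^bsub>G\<^esub>" X] X U1 Ad_smult_U[OF one_carrier_mat X wc(1)[of "\<one>\<^bsub>G\<^esub>" "\<one>\<^bsub>G\<^esub>"]] Ad_one[OF X] by simp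
  show ?thesis unfolding is_lps_def using n sa hom one by auto
qed

lemma impl_coh:
  assumes G: "group G" and n: "0 < n" and I: "impl G n \<beta> U \<omega>" and I': "impl G n \<beta> U' \<omega>'"
  shows "\<exists>b\<in>coboundaries2 G. \<omega>' = (\<lambda>x. b x * \<omega> x)"
proof -
  interpret group G by (rule G)
  note U = implD(1)[OF I] and Uc = implD(2)[OF I] and UA = implD(3)[OF I] and Um = implD(4)[OF I]
    and wc = cocyclesD[OF implD(5)[OF I]]
  note U' = implD(1)[OF I'] and Uc' = implD(2)[OF I'] and UA' = implD(3)[OF I'] and Um' = implD(4)[OF I']
    and wc' = cocyclesD[OF implD(5)[OF I']]
  have "\<exists>c. cmod c = 1 \<and> U' g = c \<cdot>\<^sub>m U g" if g: "g \<in> carrier G" for g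
    using Ad_eq_scalar[OF U[OF g] U'[OF g] n] UA[OF g] UA'[OF g] by metis
  then obtain \<mu> where m1: "\<And>g. g \<in> carrier G \<Longrightarrow> cmod (\<mu> g) = 1"
    and mU: "\<And>g. g \<in> carrier G \<Longrightarrow> U' g = \<mu> g \<cdot>\<^sub>m U g" by metis
  have mnz: "\<mu> g \<noteq> 0" if "g \<in> carrier G" for g using m1[OF that] by auto
  define b where "b x = (if x \<in> carrier G \<times> carrier G then \<mu> (fst x) * \<mu> (snd x) / \<mu> (fst x \<otimes>\<^bsub>G\<^esub> snd x) else 1)" for x
  have bc: "b \<in> coboundaries2 G" unfolding coboundaries2_def
    using m1 by (intro CollectI exI[of _ \<mu>]) (auto simp: b_def)
  have "\<omega>' (g,h) = b (g,h) * \<omega> (g,h)" if gh: "g \<in> carrier G" "h \<in> carrier G" for g h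
  proof (rule smult_cancel[OF U'[of "g \<otimes>\<^bsub>G\<^esub> h"] n])
    show "g \<otimes>\<^bsub>G\<^esub> h \<in> carrier G" using gh by simp
    have "\<omega>' (g,h) \<cdot>\<^sub>m U' (g \<otimes>\<^bsub>G\<^esub> h) = U' g * U' h" using Um' gh by simp
    also have "\<dots> = (\<mu> g * \<mu> h * \<omega> (g,h)) \<cdot>\<^sub>m U (g \<otimes>\<^bsub>G\<^esub> h)"
      using mU gh Uc Um by (simp add: sq_smult_l[where n=n] sq_smult_r[where n=n] ac_simps)
    also have "\<dots> = (\<mu> g * \<mu> h * \<omega> (g,h) / \<mu> (g \<otimes>\<^bsub>G\<^esub> h)) \<cdot>\<^sub>m U' (g \<otimes>\<^bsub>G\<^esub> h)"
      using mU[of "g \<otimes>\<^bsub>G\<^esub> h"] gh mnz[of "g \<otimes>\<^bsub>G\<^esub> h"] by simp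
    finally show "\<omega>' (g,h) \<cdot>\<^sub>m U' (g \<otimes>\<^bsub>G\<^esub> h) = (b (g,h) * \<omega> (g,h)) \<cdot>\<^sub>m U' (g \<otimes>\<^bsub>G\<^esub> h)"
      using gh by (simp add: b_def)
  qed
  then have "\<omega>' = (\<lambda>x. b x * \<omega> x)"
    using wc(2) wc'(2) by (auto simp: b_def fun_eq_iff)
  then show ?thesis using bc by blast
qed

lemma impl_rescale:
  assumes G: "group G" and I: "impl G n \<beta> U \<omega>" and b: "b \<in> coboundaries2 G"
  shows "\<exists>U'. impl G n \<beta> U' (\<lambda>x. b x * \<omega> x)"
proof -
  interpret group G by (rule G)
  note U = implD(1)[OF I] and Uc = implD(2)[OF I] and UA = implD(3)[OF I] and Um = implD(4)[OF I]
    and wc = implD(5)[OF I]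
  obtain \<mu> where m1: "\<And>g. g \<in> carrier G \<Longrightarrow> cmod (\<mu> g) = 1"
    and bd: "\<And>g h. g \<in> carrier G \<Longrightarrow> h \<in> carrier G \<Longrightarrow> b (g,h) = \<mu> g * \<mu> h / \<mu> (g \<otimes>\<^bsub>G\<^esub> h)"
    using coboundariesD[OF b] by metis
  have mnz: "\<mu> g \<noteq> 0" if "g \<in> carrier G" for g using m1[OF that] by auto
  define U' where "U' g = \<mu> g \<cdot>\<^sub>m U g" for g
  have "U' g * U' h = (b (g,h) * \<omega> (g,h)) \<cdot>\<^sub>m U' (g \<otimes>\<^bsub>G\<^esub> h)" if gh: "g \<in> carrier G" "h \<in> carrier G" for g h
  proof -
    have "U' g * U' h = (\<mu> g * \<mu> h * \<omega> (g,h)) \<cdot>\<^sub>m U (g \<otimes>\<^bsub>G\<^esub> h)"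
      using gh Uc Um by (simp add: U'_def sq_smult_l[where n=n] sq_smult_r[where n=n] ac_simps)
    also have "\<dots> = (b (g,h) * \<omega> (g,h)) \<cdot>\<^sub>m U' (g \<otimes>\<^bsub>G\<^esub> h)"
      using gh mnz[of "g \<otimes>\<^bsub>G\<^esub> h"] by (simp add: U'_def bd)
    finally show ?thesis .
  qed
  moreover have "unitary_mat n (U' g)" if "g \<in> carrier G" for g
    using unitary_smult[OF U[OF that] m1[OF that]] by (simp add: U'_def)
  moreover have "\<beta> g X = Ad (U' g) X" if "g \<in> carrier G" "X \<in> carrier_mat n n" for g X
    using UA[OF that] Ad_smult_U[OF Uc[OF that(1)] that(2) m1[OF that(1)]] by (simp add: U'_def)
  moreover have "(\<lambda>x. b x * \<omega> x) \<in> cocycles2 G"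
    using cocycle_mult[OF coboundary_cocycle[OF G b] wc] .
  ultimately show ?thesis unfolding impl_def by blast
qed

lemma impl_equiv:
  assumes G: "group G" and E: "lps_equiv G (n, \<beta>) (n', \<beta>')" and I: "impl G n \<beta> U \<omega>"
  shows "n' = n" "\<exists>U'. impl G n \<beta>' U' \<omega>"
proof -
  interpret group G by (rule G)
  note U = implD(1)[OF I] and Uc = implD(2)[OF I] and UA = implD(3)[OF I] and Um = implD(4)[OF I]
    and wc = implD(5)[OF I]
  show nn: "n' = n" using E unfolding lps_equiv_def by simp
  obtain V where V: "unitary_mat n V"
    and eq: "\<And>g X. g \<in> carrier G \<Longrightarrow> X \<in> carrier_mat n n \<Longrightarrow> \<beta>' g X = Ad (adj V) (\<beta> g (Ad V X))"
    using E unfolding lps_equiv_def by auto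
  have Vc: "V \<in> carrier_mat n n" using V unitary_carrier by auto
  define U' where "U' g = adj V * U g * V" for g
  have "U' g * U' h = \<omega> (g,h) \<cdot>\<^sub>m U' (g \<otimes>\<^bsub>G\<^esub> h)" if gh: "g \<in> carrier G" "h \<in> carrier G" for g h
  proof -
    have "U' g * U' h = adj V * (U g * U h) * V"
      using gh Uc Vc V by (simp add: U'_def massoc[where n=n] sq_mult_cm[where n=n] unitary_cancel)
    also have "\<dots> = \<omega> (g,h) \<cdot>\<^sub>m U' (g \<otimes>\<^bsub>G\<^esub> h)"
      using gh Uc Vc Um by (simp add: U'_def sq_smult_l[where n=n] sq_smult_r[where n=n] sq_mult_cm[where n=n])
    finally show ?thesis .
  qed
  moreover have "unitary_mat n (U' g)" if "g \<in> carrier G" for g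
    unfolding U'_def by (intro unitary_mult unitary_adj V U that)
  moreover have "\<beta>' g X = Ad (U' g) X" if g: "g \<in> carrier G" and X: "X \<in> carrier_mat n n" for g X
  proof -
    have "\<beta>' g X = Ad (adj V) (Ad (U g) (Ad V X))" using eq[OF g X] UA[OF g] X Vc by simp
    also have "\<dots> = Ad (adj V * U g * V) X"
      using Vc Uc[OF g] X Ad_Ad[OF adj_carrier[OF Vc] sq_mult_cm[OF Uc[OF g] Vc] X]
      by (simp add: Ad_Ad massoc[where n=n])
    finally show ?thesis by (simp add: U'_def)
  qed
  ultimately show "\<exists>U'. impl G n \<beta>' U' \<omega>" unfolding impl_def using wc by blast
qed

lemma impl_stack:
  assumes G: "group G" and I: "impl G n \<beta> U \<omega>" and I': "impl G m \<beta>' U' \<omega>'"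
  shows "impl G (n*m) (\<lambda>g. tensor_map n (\<beta> g) m (\<beta>' g)) (\<lambda>g. kron (U g) (U' g)) (\<lambda>x. \<omega> x * \<omega>' x)"
proof -
  interpret group G by (rule G)
  note U = implD(1)[OF I] and Uc = implD(2)[OF I] and UA = implD(3)[OF I] and Um = implD(4)[OF I]
    and wc = implD(5)[OF I]
  note U' = implD(1)[OF I'] and Uc' = implD(2)[OF I'] and UA' = implD(3)[OF I'] and Um' = implD(4)[OF I']
    and wc' = implD(5)[OF I']
  have "tensor_map n (\<beta> g) m (\<beta>' g) X = Ad (kron (U g) (U' g)) X"
    if g: "g \<in> carrier G" and X: "X \<in> carrier_mat (n*m) (n*m)" for g X
  proof -
    have "tensor_map n (\<beta> g) m (\<beta>' g) X = tensor_map n (Ad (U g)) m (Ad (U' g)) X"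
      using UA[OF g] UA'[OF g] by (intro tensor_map_cong) auto
    also have "\<dots> = Ad (kron (U g) (U' g)) X" using tensor_Ad[OF Uc[OF g] Uc'[OF g] X] .
    finally show ?thesis .
  qed
  moreover have "kron (U g) (U' g) * kron (U h) (U' h) = (\<omega> (g,h) * \<omega>' (g,h)) \<cdot>\<^sub>m kron (U (g \<otimes>\<^bsub>G\<^esub> h)) (U' (g \<otimes>\<^bsub>G\<^esub> h))"
    if gh: "g \<in> carrier G" "h \<in> carrier G" for g h
    using gh by (simp add: kron_mult[OF Uc Uc Uc' Uc'] Um Um' kron_smult)
  moreover have "unitary_mat (n*m) (kron (U g) (U' g))" if "g \<in> carrier G" for g
    using kron_unitary[OF U[OF that] U'[OF that]] .
  ultimately show ?thesis unfolding impl_def using cocycle_mult[OF wc wc'] by blast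
qed

lemma onsite_impl:
  assumes "on_site G (n, \<beta>)"
  shows "\<exists>U. impl G n \<beta> U (\<lambda>_. 1)"
proof -
  obtain U where U: "\<forall>g\<in>carrier G. unitary_mat n (U g)"
    "\<forall>g\<in>carrier G. \<forall>h\<in>carrier G. U (g \<otimes>\<^bsub>G\<^esub> h) = U g * U h"
    "\<forall>g\<in>carrier G. \<forall>X\<in>carrier_mat n n. \<beta> g X = Ad (U g) X"
    using assms unfolding on_site_def by auto
  then show ?thesis by (intro exI[of _ U]) (auto simp: impl_def cocycle_one)
qed


locale genum = group G for G (structure) +
  fixes N :: nat and e :: "nat \<Rightarrow> 'a"
  assumes bij: "bij_betw e {..<N} (carrier G)"
begin

definition idx where "idx x = inv_into {..<N} e x"

lemma e_in[simp]: "j < N \<Longrightarrow> e j \<in> carrier G"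
  using bij bij_betwE by blast

lemma idx: "x \<in> carrier G \<Longrightarrow> idx x < N" "x \<in> carrier G \<Longrightarrow> e (idx x) = x"
  unfolding idx_def using bij
  by (metis bij_betw_def inv_into_into lessThan_iff) (metis bij bij_betw_inv_into_right idx_def)

lemma e_eq: "j < N \<Longrightarrow> x \<in> carrier G \<Longrightarrow> (e j = x) = (j = idx x)"
  using idx bij unfolding bij_betw_def inj_on_def by (metis lessThan_iff)

lemma e_inj: "j < N \<Longrightarrow> k < N \<Longrightarrow> (e j = e k) = (j = k)"
  using bij unfolding bij_betw_def inj_on_def by auto

lemma sum_e: assumes "x \<in> carrier G"
  shows "(\<Sum>j<N. if e j = x then F j else (0::complex)) = F (idx x)"
proof -
  have "(\<Sum>j<N. if e j = x then F j else 0) = (\<Sum>j<N. if j = idx x then F j else 0)"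
    using e_eq[OF _ assms] by (intro sum.cong) auto
  also have "\<dots> = F (idx x)" using idx[OF assms] by simp
  finally show ?thesis .
qed

definition Lreg :: "('a \<times> 'a \<Rightarrow> complex) \<Rightarrow> 'a \<Rightarrow> complex mat" where
  "Lreg \<omega> g = mat N N (\<lambda>(j,k). if e j = g \<otimes> e k then \<omega> (g, e k) else 0)"

lemma Lreg_carrier[simp]: "Lreg \<omega> g \<in> carrier_mat N N" by (simp add: Lreg_def)
lemma Lreg_dim[simp]: "dim_row (Lreg \<omega> g) = N" "dim_col (Lreg \<omega> g) = N" by (simp_all add: Lreg_def)

lemma Lreg_index: "j < N \<Longrightarrow> k < N \<Longrightarrow> Lreg \<omega> g $$ (j,k) = (if e j = g \<otimes> e k then \<omega> (g, e k) else 0)"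
  by (simp add: Lreg_def)

lemma Lreg_mult: assumes w: "\<omega> \<in> cocycles2 G" and gh: "g \<in> carrier G" "h \<in> carrier G"
  shows "Lreg \<omega> g * Lreg \<omega> h = \<omega> (g,h) \<cdot>\<^sub>m Lreg \<omega> (g \<otimes> h)"
proof (rule eq_matI)
  fix j k assume "j < dim_row (\<omega> (g,h) \<cdot>\<^sub>m Lreg \<omega> (g \<otimes> h))" "k < dim_col (\<omega> (g,h) \<cdot>\<^sub>m Lreg \<omega> (g \<otimes> h))"
  then have jk: "j < N" "k < N" by auto
  have hk: "h \<otimes> e k \<in> carrier G" using gh jk by simp
  have "(Lreg \<omega> g * Lreg \<omega> h) $$ (j,k) =
     (\<Sum>i<N. if e i = h \<otimes> e k then (if e j = g \<otimes> e i then \<omega> (g, e i) else 0) * \<omega> (h, e k) else 0)"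
    using jk by (intro trans[OF mentry'] sum.cong) (auto simp: Lreg_index)
  also have "\<dots> = (if e j = g \<otimes> (h \<otimes> e k) then \<omega> (g, h \<otimes> e k) else 0) * \<omega> (h, e k)"
    using sum_e[OF hk] idx[OF hk] by simp
  also have "\<dots> = (\<omega> (g,h) \<cdot>\<^sub>m Lreg \<omega> (g \<otimes> h)) $$ (j,k)"
    using jk gh cocyclesD(3)[OF w gh(1) gh(2) e_in[OF jk(2)]] by (simp add: Lreg_index m_assoc mult.commute)
  finally show "(Lreg \<omega> g * Lreg \<omega> h) $$ (j,k) = (\<omega> (g,h) \<cdot>\<^sub>m Lreg \<omega> (g \<otimes> h)) $$ (j,k)" .
qed auto

lemma Lreg_unitary: assumes w: "\<omega> \<in> cocycles2 G" and g: "g \<in> carrier G"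
  shows "unitary_mat N (Lreg \<omega> g)"
proof (rule unitaryI2[OF Lreg_carrier], rule eq_matI)
  fix k k' assume "k < dim_row (1\<^sub>m N)" "k' < dim_col (1\<^sub>m N)"
  then have kk: "k < N" "k' < N" by auto
  have gk: "g \<otimes> e k \<in> carrier G" using g kk by simp
  have "(adj (Lreg \<omega> g) * Lreg \<omega> g) $$ (k,k') =
    (\<Sum>j<N. if e j = g \<otimes> e k then cnj (\<omega> (g, e k)) * (if e j = g \<otimes> e k' then \<omega> (g, e k') else 0) else 0)"
    using kk by (intro trans[OF mentry'] sum.cong) (auto simp: Lreg_index)
  also have "\<dots> = cnj (\<omega> (g, e k)) * (if g \<otimes> e k = g \<otimes> e k' then \<omega> (g, e k') else 0)"
    using sum_e[OF gk] idx[OF gk] by simp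
  also have "\<dots> = 1\<^sub>m N $$ (k,k')"
  proof -
    have "(g \<otimes> e k = g \<otimes> e k') = (k = k')" using g kk e_inj by auto
    moreover have "cnj (\<omega> (g, e k)) * \<omega> (g, e k) = 1"
      using cnj_mod1[OF cocyclesD(1)[OF w g e_in[OF kk(1)]]] by (simp add: mult.commute)
    ultimately show ?thesis using kk by auto
  qed
  finally show "(adj (Lreg \<omega> g) * Lreg \<omega> g) $$ (k,k') = 1\<^sub>m N $$ (k,k')" .
qed auto

lemma Lreg_one: "Lreg (\<lambda>_. 1) \<one> = 1\<^sub>m N"
  by (rule eq_matI) (auto simp: Lreg_index e_inj)

end


lemma lin_inj: "j < N \<Longrightarrow> j' < (N::nat) \<Longrightarrow> (a*N+j = a'*N+j') = (a = a' \<and> j = j')"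
  by (metis lin_div lin_mod)

lemma eq_mat_split: assumes A: "A \<in> carrier_mat (m*N) (m*N)" and B: "B \<in> carrier_mat (m*N) (m*N)"
  and eq: "\<And>a j a' j'. a < m \<Longrightarrow> j < N \<Longrightarrow> a' < m \<Longrightarrow> j' < N \<Longrightarrow>
      A $$ (a*N+j, a'*N+j') = B $$ (a*N+j, a'*N+j')"
  shows "A = B"
proof (rule eq_matI)
  fix p q assume "p < dim_row B" "q < dim_col B"
  then have pq: "p < m*N" "q < m*N" using B by auto
  have "A $$ (p div N * N + p mod N, q div N * N + q mod N) = B $$ (p div N * N + p mod N, q div N * N + q mod N)"
    using eq divmod_lt[OF pq(1)] divmod_lt[OF pq(2)] by blast
  then show "A $$ (p,q) = B $$ (p,q)" by simp
qed (use A B in auto)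

lemma mult_split_entry: assumes A: "A \<in> carrier_mat (m*N) (m*N)" and B: "B \<in> carrier_mat (m*N) (m*N)"
  and ix: "a < m" "j < N" "a' < m" "j' < N"
  shows "(A * B) $$ (a*N+j, a'*N+j') = (\<Sum>b<m. \<Sum>k<N. A $$ (a*N+j, b*N+k) * B $$ (b*N+k, a'*N+j'))"
  using A B ix by (simp add: lin_lt sum_split)

lemma sum_if_eq1: "j < (N::nat) \<Longrightarrow> (\<Sum>k<N. (if j = k then c k else 0) * (Y k::complex)) = c j * Y j"
  by (simp add: if_distrib[of "\<lambda>x. x * _"] cong: if_cong)

lemma sum_if_eq2: "j < (N::nat) \<Longrightarrow> (\<Sum>k<N. (Y k::complex) * (if k = j then c k else 0)) = Y j * c j"
  by (simp add: if_distrib[of "\<lambda>x. _ * x"] cong: if_cong)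

context genum begin

definition Tm :: "('a \<Rightarrow> complex mat) \<Rightarrow> nat \<Rightarrow> complex mat" where
  "Tm W m = mat (m*N) (m*N) (\<lambda>(p,q). if p mod N = q mod N then cnj (W (e (p mod N)) $$ (q div N, p div N)) else 0)"

lemma Tm_carrier[simp]: "Tm W m \<in> carrier_mat (m*N) (m*N)" by (simp add: Tm_def)
lemma Tm_dim[simp]: "dim_row (Tm W m) = m*N" "dim_col (Tm W m) = m*N" by (simp_all add: Tm_def)

lemma Tm_index: "a < m \<Longrightarrow> b < m \<Longrightarrow> j < N \<Longrightarrow> k < N \<Longrightarrow>
  Tm W m $$ (a*N+j, b*N+k) = (if j = k then cnj (W (e j) $$ (b,a)) else 0)"
  by (simp add: Tm_def lin_lt)

lemma Tm_unitary: assumes W: "\<And>g. g \<in> carrier G \<Longrightarrow> unitary_mat m (W g)"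
  shows "unitary_mat (m*N) (Tm W m)"
proof (rule unitaryI[OF Tm_carrier], rule eq_mat_split[OF mult_carrier_mat[OF Tm_carrier adj_carrier[OF Tm_carrier]] one_carrier_mat])
  fix a j a' j' assume ix: "a < m" "j < N" "a' < m" "j' < N"
  have Wc: "W (e j) \<in> carrier_mat m m" using W[of "e j"] ix unitary_carrier by auto
  have "(Tm W m * adj (Tm W m)) $$ (a*N+j, a'*N+j') =
      (\<Sum>b<m. \<Sum>k<N. (if j = k then cnj (W (e j) $$ (b,a)) else 0) * cnj (if j' = k then cnj (W (e j') $$ (b,a')) else 0))"
    using ix by (subst mult_split_entry[OF Tm_carrier adj_carrier[OF Tm_carrier]])
      (auto intro!: sum.cong simp: Tm_index lin_lt)
  also have "\<dots> = (\<Sum>b<m. cnj (W (e j) $$ (b,a)) * (if j' = j then W (e j') $$ (b,a') else 0))"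
    using ix by (intro sum.cong refl) (simp add: sum_if_eq1 if_distrib[of cnj] cong: if_cong)
  also have "\<dots> = (if j = j' then (adj (W (e j)) * W (e j)) $$ (a,a') else 0)"
    using ix Wc by (auto intro!: sum.cong)
  also have "\<dots> = 1\<^sub>m (m*N) $$ (a*N+j, a'*N+j')"
    using ix unitary_UU'[OF W[OF e_in[OF ix(2)]]] by (auto simp: lin_lt lin_inj)
  finally show "(Tm W m * adj (Tm W m)) $$ (a*N+j, a'*N+j') = 1\<^sub>m (m*N) $$ (a*N+j, a'*N+j')" .
qed

lemma adjW: assumes W: "\<And>g. g \<in> carrier G \<Longrightarrow> unitary_mat m (W g)"
  and Wm: "\<And>g h. g \<in> carrier G \<Longrightarrow> h \<in> carrier G \<Longrightarrow> W g * W h = \<omega> (g,h) \<cdot>\<^sub>m W (g \<otimes> h)"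
  and gx: "g \<in> carrier G" "x \<in> carrier G"
  shows "adj (W (g \<otimes> x)) * W g = \<omega> (g,x) \<cdot>\<^sub>m adj (W x)"
proof -
  have Wc: "\<And>g. g \<in> carrier G \<Longrightarrow> W g \<in> carrier_mat m m" using W unitary_carrier by auto
  have "adj (W (g \<otimes> x)) * W g = adj (W (g \<otimes> x)) * (W g * W x) * adj (W x)"
    using gx Wc W by (simp add: massoc[where n=m] sq_mult_cm[where n=m] unitary_UU[OF W[OF gx(2)]] right_mult_one_mat[OF Wc[OF gx(1)]])
  also have "\<dots> = \<omega> (g,x) \<cdot>\<^sub>m (adj (W (g \<otimes> x)) * W (g \<otimes> x)) * adj (W x)"
    using gx Wc Wm by (simp add: sq_smult_r[where n=m])
  also have "\<dots> = \<omega> (g,x) \<cdot>\<^sub>m adj (W x)"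
    using gx W Wc by (simp add: unitary_UU'[OF W] sq_smult_l[where n=m] left_mult_one_mat[OF adj_carrier[OF Wc[OF gx(2)]]])
  finally show ?thesis .
qed

lemma Tm_intertwine:
  assumes W: "\<And>g. g \<in> carrier G \<Longrightarrow> unitary_mat m (W g)"
  and Wm: "\<And>g h. g \<in> carrier G \<Longrightarrow> h \<in> carrier G \<Longrightarrow> W g * W h = \<omega> (g,h) \<cdot>\<^sub>m W (g \<otimes> h)"
  and g: "g \<in> carrier G"
  shows "Tm W m * kron (W g) (Lreg (\<lambda>_. 1) g) = kron (1\<^sub>m m) (Lreg \<omega> g) * Tm W m"
proof -
  have Wc: "\<And>g. g \<in> carrier G \<Longrightarrow> W g \<in> carrier_mat m m" using W unitary_carrier by auto
  have K1: "kron (W g) (Lreg (\<lambda>_. 1) g) \<in> carrier_mat (m*N) (m*N)" using Wc[OF g] by simp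
  have K2: "kron (1\<^sub>m m) (Lreg \<omega> g) \<in> carrier_mat (m*N) (m*N)" by simp
  show ?thesis
  proof (rule eq_mat_split[OF mult_carrier_mat[OF Tm_carrier K1] mult_carrier_mat[OF K2 Tm_carrier]])
    fix a j a' j' assume ix: "a < m" "j < N" "a' < m" "j' < N"
    have Wj: "W (e j) \<in> carrier_mat m m" using Wc ix by simp
    have "(Tm W m * kron (W g) (Lreg (\<lambda>_. 1) g)) $$ (a*N+j, a'*N+j') =
      (\<Sum>b<m. \<Sum>k<N. (if j = k then cnj (W (e j) $$ (b,a)) else 0) * (W g $$ (b,a') * Lreg (\<lambda>_. 1) g $$ (k,j')))"
      using ix Wc[OF g] by (subst mult_split_entry[OF Tm_carrier K1])
        (auto intro!: sum.cong simp: Tm_index kron_index_lin)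
    also have "\<dots> = (\<Sum>b<m. cnj (W (e j) $$ (b,a)) * (W g $$ (b,a') * Lreg (\<lambda>_. 1) g $$ (j,j')))"
      using ix by (intro sum.cong refl) (simp add: sum_if_eq1)
    also have "\<dots> = (if e j = g \<otimes> e j' then (adj (W (e j)) * W g) $$ (a,a') else 0)"
      using ix Wj Wc[OF g] by (auto simp: Lreg_index intro!: sum.cong)
    also have "\<dots> = (if e j = g \<otimes> e j' then \<omega> (g, e j') * adj (W (e j')) $$ (a,a') else 0)"
      using adjW[OF W Wm g e_in[OF ix(4)]] ix Wc[of "e j'"] by auto
    also have "\<dots> = (\<Sum>b<m. ((1\<^sub>m m) $$ (a,b) * Lreg \<omega> g $$ (j,j')) * cnj (W (e j') $$ (a',b)))"
      using ix Wc[of "e j'"] by (simp add: Lreg_index if_distrib[of "\<lambda>x. x * _"] cong: if_cong)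
    also have "\<dots> = (\<Sum>b<m. \<Sum>k<N. ((1\<^sub>m m) $$ (a,b) * Lreg \<omega> g $$ (j,k)) * (if k = j' then cnj (W (e k) $$ (a',b)) else 0))"
      using ix by (intro sum.cong refl) (simp add: sum_if_eq2)
    also have "\<dots> = (kron (1\<^sub>m m) (Lreg \<omega> g) * Tm W m) $$ (a*N+j, a'*N+j')"
      using ix by (subst mult_split_entry[OF K2 Tm_carrier])
        (auto intro!: sum.cong simp: Tm_index kron_index_lin[OF one_carrier_mat Lreg_carrier])
    finally show "(Tm W m * kron (W g) (Lreg (\<lambda>_. 1) g)) $$ (a*N+j, a'*N+j') =
      (kron (1\<^sub>m m) (Lreg \<omega> g) * Tm W m) $$ (a*N+j, a'*N+j')" .
  qed
qed

lemma Tm_conj: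
  assumes W: "\<And>g. g \<in> carrier G \<Longrightarrow> unitary_mat m (W g)"
  and Wm: "\<And>g h. g \<in> carrier G \<Longrightarrow> h \<in> carrier G \<Longrightarrow> W g * W h = \<omega> (g,h) \<cdot>\<^sub>m W (g \<otimes> h)"
  and g: "g \<in> carrier G"
  shows "Tm W m * kron (W g) (Lreg (\<lambda>_. 1) g) * adj (Tm W m) = kron (1\<^sub>m m) (Lreg \<omega> g)"
proof -
  have Wc: "W g \<in> carrier_mat m m" using W g unitary_carrier by auto
  have K2: "kron (1\<^sub>m m) (Lreg \<omega> g) \<in> carrier_mat (m*N) (m*N)" by simp
  have TU: "unitary_mat (m*N) (Tm W m)" by (rule Tm_unitary) (rule W)
  have "Tm W m * kron (W g) (Lreg (\<lambda>_. 1) g) * adj (Tm W m) = kron (1\<^sub>m m) (Lreg \<omega> g) * Tm W m * adj (Tm W m)"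
    using Tm_intertwine[OF W Wm g] by simp
  also have "\<dots> = kron (1\<^sub>m m) (Lreg \<omega> g)"
    using K2 by (simp add: massoc[where n="m*N"] unitary_UU[OF TU] sq_one_r)
  finally show ?thesis .
qed

end


definition cls :: "('g, 'b) monoid_scheme \<Rightarrow> 'g lps \<Rightarrow> ('g \<times> 'g \<Rightarrow> complex) set" where
  "cls G s = coboundaries2 G #>\<^bsub>Z2 G\<^esub> (SOME \<omega>. \<exists>U. impl G (fst s) (snd s) U \<omega>)"

lemma lps_pos: "is_lps G (n, \<beta>) \<Longrightarrow> 0 < n"
  by (simp add: is_lps_def)

lemma in_coset_eq: assumes G: "group G" and w: "\<omega> \<in> cocycles2 G" and b: "b \<in> coboundaries2 G"
  shows "coboundaries2 G #>\<^bsub>Z2 G\<^esub> (\<lambda>x. b x * \<omega> x) = coboundaries2 G #>\<^bsub>Z2 G\<^esub> \<omega>"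
proof -
  interpret Z: comm_group "Z2 G" by (rule Z2_comm_group)
  have "(\<lambda>x. b x * \<omega> x) \<in> coboundaries2 G #>\<^bsub>Z2 G\<^esub> \<omega>"
    unfolding r_coset_def using b by auto
  then show ?thesis
    using Z.repr_independence[OF _ _ coboundaries_subgroup[OF G]] w by (metis Z2_simps(1))
qed

lemma coset_eq_impl: assumes G: "group G" and w: "\<omega> \<in> cocycles2 G" and w': "\<omega>' \<in> cocycles2 G"
  and eq: "coboundaries2 G #>\<^bsub>Z2 G\<^esub> \<omega> = coboundaries2 G #>\<^bsub>Z2 G\<^esub> \<omega>'"
  shows "\<exists>b\<in>coboundaries2 G. \<omega> = (\<lambda>x. b x * \<omega>' x)"
proof -
  interpret Z: comm_group "Z2 G" by (rule Z2_comm_group)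
  have "\<omega> \<in> coboundaries2 G #>\<^bsub>Z2 G\<^esub> \<omega>'"
    using Z.repr_independenceD[OF coboundaries_subgroup[OF G], of \<omega> \<omega>'] w eq by simp
  then show ?thesis unfolding r_coset_def by auto
qed

lemma cls_impl: assumes G: "group G" and I: "impl G n \<beta> U \<omega>" and n: "0 < n"
  shows "cls G (n, \<beta>) = coboundaries2 G #>\<^bsub>Z2 G\<^esub> \<omega>"
proof -
  define \<omega>0 where "\<omega>0 = (SOME \<omega>. \<exists>U. impl G n \<beta> U \<omega>)"
  have "\<exists>U. impl G n \<beta> U \<omega>0" unfolding \<omega>0_def using someI_ex[of "\<lambda>\<omega>. \<exists>U. impl G n \<beta> U \<omega>"] I by blast
  then obtain U0 where I0: "impl G n \<beta> U0 \<omega>0" by blast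
  obtain b where b: "b \<in> coboundaries2 G" "\<omega> = (\<lambda>x. b x * \<omega>0 x)" using impl_coh[OF G n I0 I] by blast
  have "cls G (n, \<beta>) = coboundaries2 G #>\<^bsub>Z2 G\<^esub> \<omega>0" by (simp add: cls_def \<omega>0_def)
  also have "\<dots> = coboundaries2 G #>\<^bsub>Z2 G\<^esub> \<omega>" using in_coset_eq[OF G implD(5)[OF I0] b(1)] b(2) by simp
  finally show ?thesis .
qed

lemma cls_carrier: assumes G: "group G" and L: "is_lps G s" shows "cls G s \<in> carrier (H2 G)"
proof -
  interpret Z: comm_group "Z2 G" by (rule Z2_comm_group)
  obtain n \<beta> where s: "s = (n, \<beta>)" by (cases s)
  obtain U \<omega> where I: "impl G n \<beta> U \<omega>" using impl_exists[OF G] L s by blast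
  have "cls G s = coboundaries2 G #>\<^bsub>Z2 G\<^esub> \<omega>" using cls_impl[OF G I lps_pos] L s by simp
  moreover have "coboundaries2 G \<subseteq> carrier (Z2 G)"
    using subgroup.subset[OF coboundaries_subgroup[OF G]] .
  ultimately show ?thesis using implD(5)[OF I]
    by (simp add: H2_simps Z.rcosetsI)
qed

lemma equiv_of_conj:
  assumes V: "unitary_mat n V"
    and K: "\<And>g. g \<in> carrier G \<Longrightarrow> K g \<in> carrier_mat n n"
    and b: "\<And>g X. g \<in> carrier G \<Longrightarrow> X \<in> carrier_mat n n \<Longrightarrow> \<beta> g X = Ad (K g) X"
    and b': "\<And>g X. g \<in> carrier G \<Longrightarrow> X \<in> carrier_mat n n \<Longrightarrow> \<beta>' g X = Ad (K' g) X"
    and conj: "\<And>g. g \<in> carrier G \<Longrightarrow> K' g = adj V * K g * V"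
  shows "lps_equiv G (n, \<beta>) (n, \<beta>')"
proof -
  have Vc: "V \<in> carrier_mat n n" using V unitary_carrier by auto
  have "\<beta>' g X = Ad (adj V) (\<beta> g (Ad V X))" if g: "g \<in> carrier G" and X: "X \<in> carrier_mat n n" for g X
  proof -
    have "Ad (adj V) (\<beta> g (Ad V X)) = Ad (adj V) (Ad (K g) (Ad V X))" using b[OF g] X Vc by simp
    also have "\<dots> = Ad (adj V * (K g * V)) X"
      using Vc K[OF g] X Ad_Ad[OF adj_carrier[OF Vc] sq_mult_cm[OF K[OF g] Vc] X]
      by (simp add: Ad_Ad)
    also have "\<dots> = \<beta>' g X" using b'[OF g X] conj[OF g] Vc K[OF g] by (simp add: massoc[where n=n])
    finally show ?thesis by simp
  qed
  then show ?thesis unfolding lps_equiv_def using V by auto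
qed

lemma stack_simp: "stack (n, \<beta>) (m, \<beta>') = (n*m, \<lambda>g. tensor_map n (\<beta> g) m (\<beta>' g))"
  by (simp add: stack_def)

lemma stab_imp_cls:
  assumes G: "group G" and S: "stably_equiv G s t"
  shows "cls G s = cls G t"
proof -
  obtain n \<beta> where s: "s = (n, \<beta>)" by (cases s)
  obtain n' \<beta>' where t: "t = (n', \<beta>')" by (cases t)
  obtain k \<delta> k' \<delta>' where os: "on_site G (k, \<delta>)" "on_site G (k', \<delta>')"
    and eq: "lps_equiv G (stack (n, \<beta>) (k, \<delta>)) (stack (n', \<beta>') (k', \<delta>'))"
    and L: "is_lps G (n, \<beta>)" "is_lps G (n', \<beta>')"
    using S s t unfolding stably_equiv_def by (metis surj_pair)
  have kp: "0 < k" "0 < k'" using os unfolding on_site_def by (auto simp: lps_pos)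
  obtain U \<omega> where I: "impl G n \<beta> U \<omega>" using impl_exists[OF G L(1)] by blast
  obtain U' \<omega>' where I': "impl G n' \<beta>' U' \<omega>'" using impl_exists[OF G L(2)] by blast
  obtain D where D: "impl G k \<delta> D (\<lambda>_. 1)" using onsite_impl[OF os(1)] by blast
  obtain D' where D': "impl G k' \<delta>' D' (\<lambda>_. 1)" using onsite_impl[OF os(2)] by blast
  have S1: "impl G (n*k) (\<lambda>g. tensor_map n (\<beta> g) k (\<delta> g)) (\<lambda>g. kron (U g) (D g)) \<omega>"
    using impl_stack[OF G I D] by simp
  have S2: "impl G (n'*k') (\<lambda>g. tensor_map n' (\<beta>' g) k' (\<delta>' g)) (\<lambda>g. kron (U' g) (D' g)) \<omega>'"
    using impl_stack[OF G I' D'] by simp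
  note eq' = eq[unfolded stack_simp]
  have dims: "n'*k' = n*k" using impl_equiv(1)[OF G eq' S1] .
  obtain U2 where S3: "impl G (n*k) (\<lambda>g. tensor_map n' (\<beta>' g) k' (\<delta>' g)) U2 \<omega>"
    using impl_equiv(2)[OF G eq' S1] by blast
  have pos: "0 < n*k" using L kp by (simp add: lps_pos)
  obtain b where b: "b \<in> coboundaries2 G" "\<omega>' = (\<lambda>x. b x * \<omega> x)"
    using impl_coh[OF G pos S3] S2 dims by auto
  have "cls G t = coboundaries2 G #>\<^bsub>Z2 G\<^esub> \<omega>'" using cls_impl[OF G I' lps_pos[OF L(2)]] t by simp
  also have "\<dots> = coboundaries2 G #>\<^bsub>Z2 G\<^esub> \<omega>" using in_coset_eq[OF G implD(5)[OF I] b(1)] b(2) by simp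
  also have "\<dots> = cls G s" using cls_impl[OF G I lps_pos[OF L(1)]] s by simp
  finally show ?thesis by simp
qed


lemma kron_smult_l: "kron (a \<cdot>\<^sub>m A) B = a \<cdot>\<^sub>m kron A B"
  by (rule eq_matI) (auto simp: kron_def divmod_lt)

context genum begin

lemma N_pos: "0 < N"
proof (rule ccontr)
  assume "\<not> 0 < N"
  then have "carrier G = {}" using bij unfolding bij_betw_def by auto
  then show False using one_closed by blast
qed

lemma onsite_reg: assumes k: "0 < k"
  shows "on_site G (k*N, \<lambda>g. Ad (kron (1\<^sub>m k) (Lreg (\<lambda>_. 1) g)))"
proof -
  define R where "R g = kron (1\<^sub>m k) (Lreg (\<lambda>_. 1) g)" for g
  have Ru: "unitary_mat (k*N) (R g)" if "g \<in> carrier G" for g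
    unfolding R_def by (intro kron_unitary unitary_one Lreg_unitary cocycle_one that)
  have Rm: "R g * R h = R (g \<otimes> h)" if "g \<in> carrier G" "h \<in> carrier G" for g h
    unfolding R_def using that
    by (simp add: kron_mult[OF one_carrier_mat one_carrier_mat Lreg_carrier Lreg_carrier] Lreg_mult[OF cocycle_one])
  have I: "impl G (k*N) (\<lambda>g. Ad (R g)) R (\<lambda>_. 1)"
    unfolding impl_def using Ru Rm cocycle_one by auto
  have L: "is_lps G (k*N, \<lambda>g. Ad (R g))"
    by (rule lps_of_impl[OF is_group _ I]) (use k N_pos in simp)
  have R1: "R \<one> = 1\<^sub>m (k*N)" unfolding R_def by (simp add: Lreg_one kron_one)
  show ?thesis unfolding on_site_def using L Ru Rm R1
    by (auto simp: R_def[symmetric] intro!: exI[of _ R])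
qed

lemma same_cocycle_stab:
  assumes L: "is_lps G (n, \<beta>)" "is_lps G (n', \<beta>')"
    and I: "impl G n \<beta> U \<omega>" and I': "impl G n' \<beta>' U' \<omega>"
  shows "stably_equiv G (n, \<beta>) (n', \<beta>')"
proof -
  have n: "0 < n" "0 < n'" using L lps_pos by auto
  note U = implD(1)[OF I] and Uc = implD(2)[OF I] and UA = implD(3)[OF I] and Um = implD(4)[OF I]
    and wc = implD(5)[OF I]
  note U' = implD(1)[OF I'] and Uc' = implD(2)[OF I'] and UA' = implD(3)[OF I'] and Um' = implD(4)[OF I']
  define L1 where "L1 g = Lreg (\<lambda>_. 1) g" for g
  define d where "d = (n'*N, \<lambda>g. Ad (kron (1\<^sub>m n') (L1 g)))"
  define d' where "d' = (n*N, \<lambda>g. Ad (kron (1\<^sub>m n) (L1 g)))"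
  have od: "on_site G d" "on_site G d'" unfolding d_def d'_def L1_def using onsite_reg n by auto
  obtain D where D: "impl G (n'*N) (\<lambda>g. Ad (kron (1\<^sub>m n') (L1 g))) D (\<lambda>_. 1)"
    using onsite_impl od(1) unfolding d_def by blast
  obtain D' where D': "impl G (n*N) (\<lambda>g. Ad (kron (1\<^sub>m n) (L1 g))) D' (\<lambda>_. 1)"
    using onsite_impl od(2) unfolding d'_def by blast
  define m where "m = n*n'"
  have mm: "n'*n = m" by (simp add: m_def)
  define W where "W g = kron (U g) (1\<^sub>m n')" for g
  define W' where "W' g = kron (U' g) (1\<^sub>m n)" for g
  have Wu: "unitary_mat m (W g)" if "g \<in> carrier G" for g
    unfolding W_def m_def by (intro kron_unitary U that unitary_one)
  have Wu': "unitary_mat m (W' g)" if "g \<in> carrier G" for g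
    unfolding W'_def mm[symmetric] by (intro kron_unitary U' that unitary_one)
  have Wm: "W g * W h = \<omega> (g,h) \<cdot>\<^sub>m W (g \<otimes> h)" if "g \<in> carrier G" "h \<in> carrier G" for g h
    unfolding W_def using that
    by (simp add: kron_mult[OF Uc Uc one_carrier_mat one_carrier_mat] Um kron_smult_l)
  have Wm': "W' g * W' h = \<omega> (g,h) \<cdot>\<^sub>m W' (g \<otimes> h)" if "g \<in> carrier G" "h \<in> carrier G" for g h
    unfolding W'_def using that
    by (simp add: kron_mult[OF Uc' Uc' one_carrier_mat one_carrier_mat] Um' kron_smult_l)
  define Ts where "Ts = Tm W m"
  define Tt where "Tt = Tm W' m"
  have Tsu: "unitary_mat (m*N) Ts" unfolding Ts_def by (rule Tm_unitary) (rule Wu)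
  have Ttu: "unitary_mat (m*N) Tt" unfolding Tt_def by (rule Tm_unitary) (rule Wu')
  have Tsc: "Ts \<in> carrier_mat (m*N) (m*N)" and Ttc: "Tt \<in> carrier_mat (m*N) (m*N)"
    by (simp_all add: Ts_def Tt_def)
  define Ks where "Ks g = kron (W g) (L1 g)" for g
  define Kt where "Kt g = kron (W' g) (L1 g)" for g
  have Ksc: "Ks g \<in> carrier_mat (m*N) (m*N)" if "g \<in> carrier G" for g
    unfolding Ks_def L1_def using unitary_carrier[OF Wu[OF that]] by simp
  have Ktc: "Kt g \<in> carrier_mat (m*N) (m*N)" if "g \<in> carrier G" for g
    unfolding Kt_def L1_def using unitary_carrier[OF Wu'[OF that]] by simp
  have cs: "Ts * Ks g * adj Ts = kron (1\<^sub>m m) (Lreg \<omega> g)" if "g \<in> carrier G" for g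
    unfolding Ts_def Ks_def L1_def by (rule Tm_conj[OF Wu Wm that])
  have ct: "Tt * Kt g * adj Tt = kron (1\<^sub>m m) (Lreg \<omega> g)" if "g \<in> carrier G" for g
    unfolding Tt_def Kt_def L1_def by (rule Tm_conj[OF Wu' Wm' that])
  define V where "V = adj Ts * Tt"
  have Vu: "unitary_mat (m*N) V" unfolding V_def by (intro unitary_mult unitary_adj Tsu Ttu)
  have conj: "Kt g = adj V * Ks g * V" if g: "g \<in> carrier G" for g
  proof -
    have "Kt g = adj Tt * (Tt * Kt g * adj Tt) * Tt"
      using Ttc Ktc[OF g] Ttu by (simp add: massoc[where n="m*N"] sq_mult_cm[where n="m*N"] unitary_cancel
         unitary_UU'[OF Ttu] right_mult_one_mat[OF Ktc[OF g]])
    also have "\<dots> = adj Tt * (Ts * Ks g * adj Ts) * Tt" using cs[OF g] ct[OF g] by simp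
    also have "\<dots> = adj V * Ks g * V"
      using Ttc Tsc Ksc[OF g] by (simp add: V_def adj_mult[OF adj_carrier[OF Tsc] Ttc] massoc[where n="m*N"] sq_mult_cm[where n="m*N"])
    finally show ?thesis .
  qed
  have S1: "impl G (n*(n'*N)) (\<lambda>g. tensor_map n (\<beta> g) (n'*N) (Ad (kron (1\<^sub>m n') (L1 g)))) (\<lambda>g. kron (U g) (D g)) \<omega>"
    using impl_stack[OF is_group I D] by simp
  have S2: "impl G (n'*(n*N)) (\<lambda>g. tensor_map n' (\<beta>' g) (n*N) (Ad (kron (1\<^sub>m n) (L1 g)))) (\<lambda>g. kron (U' g) (D' g)) \<omega>"
    using impl_stack[OF is_group I' D'] by simp
  have b1: "tensor_map n (\<beta> g) (n'*N) (Ad (kron (1\<^sub>m n') (L1 g))) X = Ad (Ks g) X"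
    if g: "g \<in> carrier G" and X: "X \<in> carrier_mat (m*N) (m*N)" for g X
  proof -
    have X': "X \<in> carrier_mat (n*(n'*N)) (n*(n'*N))" using X by (simp add: m_def mult.assoc)
    have "tensor_map n (\<beta> g) (n'*N) (Ad (kron (1\<^sub>m n') (L1 g))) X =
          tensor_map n (Ad (U g)) (n'*N) (Ad (kron (1\<^sub>m n') (L1 g))) X"
      using UA[OF g] by (intro tensor_map_cong) auto
    also have "\<dots> = Ad (kron (U g) (kron (1\<^sub>m n') (L1 g))) X"
      by (rule tensor_Ad[OF Uc[OF g] _ X']) (simp add: L1_def)
    also have "kron (U g) (kron (1\<^sub>m n') (L1 g)) = Ks g"
      unfolding Ks_def W_def L1_def by (rule kron_assoc[OF Uc[OF g] one_carrier_mat Lreg_carrier])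
    finally show ?thesis .
  qed
  have b2: "tensor_map n' (\<beta>' g) (n*N) (Ad (kron (1\<^sub>m n) (L1 g))) X = Ad (Kt g) X"
    if g: "g \<in> carrier G" and X: "X \<in> carrier_mat (m*N) (m*N)" for g X
  proof -
    have X': "X \<in> carrier_mat (n'*(n*N)) (n'*(n*N))" using X by (simp add: m_def ac_simps)
    have "tensor_map n' (\<beta>' g) (n*N) (Ad (kron (1\<^sub>m n) (L1 g))) X =
          tensor_map n' (Ad (U' g)) (n*N) (Ad (kron (1\<^sub>m n) (L1 g))) X"
      using UA'[OF g] by (intro tensor_map_cong) auto
    also have "\<dots> = Ad (kron (U' g) (kron (1\<^sub>m n) (L1 g))) X"
      by (rule tensor_Ad[OF Uc'[OF g] _ X']) (simp add: L1_def)
    also have "kron (U' g) (kron (1\<^sub>m n) (L1 g)) = Kt g"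
      unfolding Kt_def W'_def L1_def by (rule kron_assoc[OF Uc'[OF g] one_carrier_mat Lreg_carrier])
    finally show ?thesis .
  qed
  have E: "lps_equiv G (m*N, \<lambda>g. tensor_map n (\<beta> g) (n'*N) (Ad (kron (1\<^sub>m n') (L1 g))))
                         (m*N, \<lambda>g. tensor_map n' (\<beta>' g) (n*N) (Ad (kron (1\<^sub>m n) (L1 g))))"
    by (rule equiv_of_conj[OF Vu Ksc b1 b2 conj])
  have "lps_equiv G (stack (n, \<beta>) d) (stack (n', \<beta>') d')"
    using E unfolding d_def d'_def stack_simp by (simp add: m_def ac_simps)
  then show ?thesis unfolding stably_equiv_def using L od by blast
qed

end

lemma stab_iff: assumes G: "group G" and fin: "finite (carrier G)"
  shows "stably_equiv G s t \<longleftrightarrow> is_lps G s \<and> is_lps G t \<and> cls G s = cls G t"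
proof
  assume "stably_equiv G s t"
  then show "is_lps G s \<and> is_lps G t \<and> cls G s = cls G t"
    using stab_imp_cls[OF G] unfolding stably_equiv_def by blast
next
  assume A: "is_lps G s \<and> is_lps G t \<and> cls G s = cls G t"
  obtain n \<beta> where s: "s = (n, \<beta>)" by (cases s)
  obtain n' \<beta>' where t: "t = (n', \<beta>')" by (cases t)
  obtain e where e: "bij_betw e {0..<card (carrier G)} (carrier G)"
    using ex_bij_betw_nat_finite[OF fin] by blast
  have "genum G (card (carrier G)) e"
    unfolding genum_def genum_axioms_def using G e by (simp add: atLeast0LessThan)
  then interpret genum G "card (carrier G)" e .
  obtain U \<omega> where I: "impl G n \<beta> U \<omega>" using impl_exists[OF G] A s by blast
  obtain U' \<omega>' where I': "impl G n' \<beta>' U' \<omega>'" using impl_exists[OF G] A t by blast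
  have "coboundaries2 G #>\<^bsub>Z2 G\<^esub> \<omega> = coboundaries2 G #>\<^bsub>Z2 G\<^esub> \<omega>'"
    using A s t cls_impl[OF G I] cls_impl[OF G I'] lps_pos by metis
  then obtain b where b: "b \<in> coboundaries2 G" "\<omega> = (\<lambda>x. b x * \<omega>' x)"
    using coset_eq_impl[OF G implD(5)[OF I] implD(5)[OF I']] by blast
  obtain U2 where I2: "impl G n' \<beta>' U2 \<omega>" using impl_rescale[OF G I' b(1)] b(2) by blast
  show "stably_equiv G s t" using same_cocycle_stab[OF _ _ I I2] A s t by simp
qed


lemma group_transfer:
  fixes M :: "('m, 'c) monoid_scheme" and H :: "('h, 'd) monoid_scheme"
  assumes H: "group H" and bij: "bij_betw f (carrier M) (carrier H)"
    and hom: "\<And>x y. x \<in> carrier M \<Longrightarrow> y \<in> carrier M \<Longrightarrow> f (x \<otimes>\<^bsub>M\<^esub> y) = f x \<otimes>\<^bsub>H\<^esub> f y"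
    and cl: "\<And>x y. x \<in> carrier M \<Longrightarrow> y \<in> carrier M \<Longrightarrow> x \<otimes>\<^bsub>M\<^esub> y \<in> carrier M"
    and one: "\<one>\<^bsub>M\<^esub> \<in> carrier M" and f1: "f \<one>\<^bsub>M\<^esub> = \<one>\<^bsub>H\<^esub>"
  shows "group M"
proof -
  interpret H: group H by (rule H)
  have inj: "inj_on f (carrier M)" and fc: "\<And>x. x \<in> carrier M \<Longrightarrow> f x \<in> carrier H"
    and surj: "f ` carrier M = carrier H"
    using bij unfolding bij_betw_def by auto
  show ?thesis
  proof (rule groupI)
    fix x y z assume xyz: "x \<in> carrier M" "y \<in> carrier M" "z \<in> carrier M"
    have "f (x \<otimes>\<^bsub>M\<^esub> y \<otimes>\<^bsub>M\<^esub> z) = f (x \<otimes>\<^bsub>M\<^esub> (y \<otimes>\<^bsub>M\<^esub> z))"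
      using xyz by (simp add: hom cl fc H.m_assoc)
    then show "x \<otimes>\<^bsub>M\<^esub> y \<otimes>\<^bsub>M\<^esub> z = x \<otimes>\<^bsub>M\<^esub> (y \<otimes>\<^bsub>M\<^esub> z)"
      using inj xyz cl by (meson inj_onD)
  next
    fix x assume x: "x \<in> carrier M"
    have "f (\<one>\<^bsub>M\<^esub> \<otimes>\<^bsub>M\<^esub> x) = f x" using x one by (simp add: hom f1 fc)
    then show "\<one>\<^bsub>M\<^esub> \<otimes>\<^bsub>M\<^esub> x = x" using inj x one cl by (meson inj_onD)
  next
    fix x assume x: "x \<in> carrier M"
    define y where "y = inv_into (carrier M) f (inv\<^bsub>H\<^esub> (f x))"
    have iH: "inv\<^bsub>H\<^esub> (f x) \<in> f ` carrier M" using surj fc[OF x] by simp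
    have yc: "y \<in> carrier M" unfolding y_def using iH by (rule inv_into_into)
    have fy: "f y = inv\<^bsub>H\<^esub> (f x)" unfolding y_def using iH by (rule f_inv_into_f)
    have "f (y \<otimes>\<^bsub>M\<^esub> x) = f \<one>\<^bsub>M\<^esub>" using x yc by (simp add: hom fy f1 fc)
    then have "y \<otimes>\<^bsub>M\<^esub> x = \<one>\<^bsub>M\<^esub>" using inj x yc one cl by (meson inj_onD)
    then show "\<exists>y\<in>carrier M. y \<otimes>\<^bsub>M\<^esub> x = \<one>\<^bsub>M\<^esub>" using yc by blast
  qed (use cl one in auto)
qed

lemma SymQ_simps: "carrier (SymQ G) = Sym0 G // stab_rel G"
  "X \<otimes>\<^bsub>SymQ G\<^esub> Y = stab_rel G `` {stack (SOME s. s \<in> X) (SOME t. t \<in> Y)}"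
  "\<one>\<^bsub>SymQ G\<^esub> = stab_rel G `` {(1, \<lambda>g A. A)}"
  by (simp_all add: SymQ_def)

lemma stab_class: assumes G: "group G" and fin: "finite (carrier G)"
  shows "stab_rel G `` {s} = {t. is_lps G s \<and> is_lps G t \<and> cls G s = cls G t}"
  by (auto simp: stab_rel_def stab_iff[OF G fin])

lemma SymQ_carrier: assumes G: "group G" and fin: "finite (carrier G)"
  shows "X \<in> carrier (SymQ G) \<longleftrightarrow> (\<exists>s. is_lps G s \<and> X = {t. is_lps G t \<and> cls G t = cls G s})"
  unfolding SymQ_simps quotient_def Sym0_def using stab_class[OF G fin] by auto

lemma some_class: assumes "is_lps G s"
  shows "is_lps G (SOME t. t \<in> {t. is_lps G t \<and> cls G t = cls G s}) \<and>
         cls G (SOME t. t \<in> {t. is_lps G t \<and> cls G t = cls G s}) = cls G s"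
  using someI[of "\<lambda>t. t \<in> {t. is_lps G t \<and> cls G t = cls G s}" s] assms by auto

lemma stack_lps_cls: assumes G: "group G" and L: "is_lps G s" "is_lps G t"
  shows "is_lps G (stack s t) \<and> cls G (stack s t) = cls G s <#>\<^bsub>Z2 G\<^esub> cls G t"
proof -
  obtain n \<beta> where s: "s = (n, \<beta>)" by (cases s)
  obtain m \<beta>' where t: "t = (m, \<beta>')" by (cases t)
  obtain U \<omega> where I: "impl G n \<beta> U \<omega>" using impl_exists[OF G] L s by blast
  obtain U' \<omega>' where I': "impl G m \<beta>' U' \<omega>'" using impl_exists[OF G] L t by blast
  have np: "0 < n" "0 < m" using L s t lps_pos by auto
  note S = impl_stack[OF G I I']
  have "is_lps G (stack s t)" using lps_of_impl[OF G _ S] np s t by (simp add: stack_simp)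
  moreover have "cls G (stack s t) = cls G s <#>\<^bsub>Z2 G\<^esub> cls G t"
  proof -
    have "cls G (stack s t) = coboundaries2 G #>\<^bsub>Z2 G\<^esub> (\<lambda>x. \<omega> x * \<omega>' x)"
      using cls_impl[OF G S] np s t by (simp add: stack_simp)
    also have "\<dots> = (coboundaries2 G #>\<^bsub>Z2 G\<^esub> \<omega>) <#>\<^bsub>Z2 G\<^esub> (coboundaries2 G #>\<^bsub>Z2 G\<^esub> \<omega>')"
      using normal.rcos_sum[OF coboundaries_normal[OF G], of \<omega> \<omega>'] implD(5)[OF I] implD(5)[OF I'] by simp
    also have "\<dots> = cls G s <#>\<^bsub>Z2 G\<^esub> cls G t"
      using cls_impl[OF G I] cls_impl[OF G I'] np s t by simp
    finally show ?thesis .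
  qed
  ultimately show ?thesis by blast
qed

lemma triv_lps: assumes G: "group G"
  shows "is_lps G (1, \<lambda>g A. A) \<and> cls G (1, \<lambda>g A. A) = coboundaries2 G"
proof -
  interpret Z: comm_group "Z2 G" by (rule Z2_comm_group)
  have I: "impl G 1 (\<lambda>g A. A) (\<lambda>g. 1\<^sub>m 1) (\<lambda>_. 1)"
    unfolding impl_def by (auto simp: unitary_one Ad_one cocycle_one)
  have "is_lps G (1, \<lambda>g A. A)" using lps_of_impl[OF G _ I] by simp
  moreover have "cls G (1, \<lambda>g A. A) = coboundaries2 G"
  proof -
    have "(\<lambda>_. 1) \<in> coboundaries2 G" unfolding coboundaries2_def
      by (intro CollectI exI[of _ "\<lambda>_. 1"]) auto
    then show ?thesis using cls_impl[OF G I] Z.coset_join2[OF _ coboundaries_subgroup[OF G]] cocycle_one[of G]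
      by simp
  qed
  ultimately show ?thesis by blast
qed

lemma reg_lps: assumes G: "group G" and fin: "finite (carrier G)" and w: "\<omega> \<in> cocycles2 G"
  shows "\<exists>s. is_lps G s \<and> cls G s = coboundaries2 G #>\<^bsub>Z2 G\<^esub> \<omega>"
proof -
  obtain e where e: "bij_betw e {0..<card (carrier G)} (carrier G)"
    using ex_bij_betw_nat_finite[OF fin] by blast
  have "genum G (card (carrier G)) e"
    unfolding genum_def genum_axioms_def using G e by (simp add: atLeast0LessThan)
  then interpret genum G "card (carrier G)" e .
  have I: "impl G (card (carrier G)) (\<lambda>g. Ad (Lreg \<omega> g)) (Lreg \<omega>) \<omega>"
    unfolding impl_def using Lreg_unitary[OF w] Lreg_mult[OF w] w by auto
  show ?thesis using lps_of_impl[OF G N_pos I] cls_impl[OF G I N_pos] by blast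
qed


theorem lemmaA2:
  fixes G :: "('g, 'b) monoid_scheme"
  assumes "group G" and "finite (carrier G)"
  shows "group (SymQ G) \<and> (\<exists>\<Omega>. \<Omega> \<in> iso (SymQ G) (H2 G))"
proof -
  note G = assms(1) and fin = assms(2)
  define cl where "cl s = {t. is_lps G t \<and> cls G t = cls G s}" for s
  define \<Omega> where "\<Omega> X = cls G (SOME t. t \<in> X)" for X
  have carr: "X \<in> carrier (SymQ G) \<longleftrightarrow> (\<exists>s. is_lps G s \<and> X = cl s)" for X
    unfolding cl_def by (rule SymQ_carrier[OF G fin])
  have Om: "\<Omega> (cl s) = cls G s" and Osome: "is_lps G (SOME t. t \<in> cl s)" "cls G (SOME t. t \<in> cl s) = cls G s"
    if "is_lps G s" for s
    using some_class[OF that] unfolding \<Omega>_def cl_def by auto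
  have clst: "stab_rel G `` {s} = cl s" if "is_lps G s" for s
    using stab_class[OF G fin, of s] that unfolding cl_def by auto
  have Oc: "\<Omega> X \<in> carrier (H2 G)" if "X \<in> carrier (SymQ G)" for X
    using that carr Om cls_carrier[OF G] by auto
  have mult: "X \<otimes>\<^bsub>SymQ G\<^esub> Y \<in> carrier (SymQ G) \<and> \<Omega> (X \<otimes>\<^bsub>SymQ G\<^esub> Y) = \<Omega> X \<otimes>\<^bsub>H2 G\<^esub> \<Omega> Y"
    if X: "X \<in> carrier (SymQ G)" and Y: "Y \<in> carrier (SymQ G)" for X Y
  proof -
    obtain s where s: "is_lps G s" "X = cl s" using X carr by auto
    obtain t where t: "is_lps G t" "Y = cl t" using Y carr by auto
    define x where "x = (SOME u. u \<in> X)"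
    define y where "y = (SOME u. u \<in> Y)"
    have x: "is_lps G x" "cls G x = cls G s" using Osome[OF s(1)] s by (auto simp: x_def)
    have y: "is_lps G y" "cls G y = cls G t" using Osome[OF t(1)] t by (auto simp: y_def)
    note st = stack_lps_cls[OF G x(1) y(1)]
    have XY: "X \<otimes>\<^bsub>SymQ G\<^esub> Y = cl (stack x y)"
      using clst[of "stack x y"] st by (simp add: SymQ_simps x_def y_def)
    have "X \<otimes>\<^bsub>SymQ G\<^esub> Y \<in> carrier (SymQ G)" using XY st carr by blast
    moreover have "\<Omega> (X \<otimes>\<^bsub>SymQ G\<^esub> Y) = \<Omega> X \<otimes>\<^bsub>H2 G\<^esub> \<Omega> Y"
      using XY st Om[of "stack x y"] x y s t Om[OF s(1)] Om[OF t(1)] by (simp add: H2_simps)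
    ultimately show ?thesis ..
  qed
  have one: "\<one>\<^bsub>SymQ G\<^esub> \<in> carrier (SymQ G)" "\<Omega> \<one>\<^bsub>SymQ G\<^esub> = \<one>\<^bsub>H2 G\<^esub>"
  proof -
    note tr = triv_lps[OF G]
    have "\<one>\<^bsub>SymQ G\<^esub> = cl (1, \<lambda>g A. A)" using clst tr by (simp add: SymQ_simps)
    then show "\<one>\<^bsub>SymQ G\<^esub> \<in> carrier (SymQ G)" "\<Omega> \<one>\<^bsub>SymQ G\<^esub> = \<one>\<^bsub>H2 G\<^esub>"
      using carr tr Om by (auto simp: H2_simps)
  qed
  have inj: "inj_on \<Omega> (carrier (SymQ G))"
  proof (rule inj_onI)
    fix X Y assume X: "X \<in> carrier (SymQ G)" and Y: "Y \<in> carrier (SymQ G)" and eq: "\<Omega> X = \<Omega> Y"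
    obtain s where s: "is_lps G s" "X = cl s" using X carr by auto
    obtain t where t: "is_lps G t" "Y = cl t" using Y carr by auto
    show "X = Y" using eq s t Om by (simp add: cl_def)
  qed
  have surj: "\<Omega> ` carrier (SymQ G) = carrier (H2 G)"
  proof
    show "\<Omega> ` carrier (SymQ G) \<subseteq> carrier (H2 G)" using Oc by auto
  next
    show "carrier (H2 G) \<subseteq> \<Omega> ` carrier (SymQ G)"
    proof
      fix C assume "C \<in> carrier (H2 G)"
      then obtain \<omega> where w: "\<omega> \<in> cocycles2 G" "C = coboundaries2 G #>\<^bsub>Z2 G\<^esub> \<omega>"
        by (auto simp: H2_simps RCOSETS_def)
      obtain s where s: "is_lps G s" "cls G s = C" using reg_lps[OF G fin w(1)] w(2) by auto
      have "cl s \<in> carrier (SymQ G)" using s(1) by (intro carr[THEN iffD2] exI[of _ s]) simp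
      moreover have "\<Omega> (cl s) = C" using Om s by simp
      ultimately show "C \<in> \<Omega> ` carrier (SymQ G)" by force
    qed
  qed
  have bij: "bij_betw \<Omega> (carrier (SymQ G)) (carrier (H2 G))"
    using inj surj by (simp add: bij_betw_def)
  have iso: "\<Omega> \<in> iso (SymQ G) (H2 G)"
    unfolding iso_def hom_def using bij Oc mult by auto
  have "group (SymQ G)"
    by (rule group_transfer[OF H2_group[OF G] bij]) (use mult one in auto)
  then show ?thesis using iso by blast
qed


end
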